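(* Let $n \geq 1$. The C*-algebra $C^\ast(Q_n)$ is $2^{n-1}$-subhomogeneous, i.e. every irreducible representation of $C^\ast(Q_n)$ acts on a Hilbert space of dimension at most $2^{n-1}$. Moreover, for every irreducible representation $\rho$ of $C^\ast(Q_n)$ on a Hilbert space $\mathcal{H}$ and every vertex $x \in U_n \cup V_n$ one has $\dim(\rho(p_x)\mathcal{H}) \leq 1$.
   Context: For $n \geq 1$, identify each integer $0 \le i < 2^n$ with its $n$-digit binary representation $i_{n-1}\dots i_1 i_0$ (so $i = \sum_{k=0}^{n-1} i_k 2^k$, $i_k \in \{0,1\}$) and write $\mathrm{par}_k(i) = \sum_{\ell=0}^{k} i_\ell \bmod 2$. For $k<n$, $i \# k$ denotes the integer obtained from $i$ by flipping its $k$-th binary digit. The hypercube $Q_n$ is the bipartite graph with vertex sets $U_n = \{i < 2^n \mid \mathrm{par}_{n-1}(i) = 0\}$, $V_n = \{j < 2^n \mid \mathrm{par}_{n-1}(j)=1\}$, in which $i \in U_n$ and $j \in V_n$ are adjacent iff $j = i \# k$ for some $k<n$. The hypercube C*-algebra $C^\ast(Q_n)$ is the universal unital C*-algebra generated by projections $p_x$, $x \in U_n \cup V_n$, subject to $\sum_{u \in U_n} p_u = 1 = \sum_{v \in V_n} p_v$ and $p_u p_v = 0$ whenever $u \in U_n$, $v \in V_n$ are not adjacent in $Q_n$. *)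

theory Defs
  imports "HOL-Analysis.Analysis"
begin

text \<open>HOL-Analysis only provides real inner product spaces, so we introduce the class of
complex Hilbert spaces: a Banach space (complete normed space) carrying a complex scalar
multiplication compatible with the real one and a complex inner product (linear in the
second, conjugate-linear in the first argument) that induces the norm.\<close>

class complex_hilbert = banach +
  fixes scaleC :: "complex \<Rightarrow> 'a \<Rightarrow> 'a"
    and cinner :: "'a \<Rightarrow> 'a \<Rightarrow> complex"
  assumes scaleC_add_right: "scaleC a (x + y) = scaleC a x + scaleC a y"
    and scaleC_add_left: "scaleC (a + b) x = scaleC a x + scaleC b x"
    and scaleC_scaleC: "scaleC a (scaleC b x) = scaleC (a * b) x"
    and scaleC_one: "scaleC 1 x = x"
    and scaleR_scaleC: "scaleR r x = scaleC (complex_of_real r) x"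
    and cinner_commute: "cinner x y = cnj (cinner y x)"
    and cinner_add_left: "cinner (x + y) z = cinner x z + cinner y z"
    and cinner_scaleC_left: "cinner (scaleC a x) y = cnj a * cinner x y"
    and norm_cinner: "complex_of_real ((norm x)\<^sup>2) = cinner x x"

text \<open>Sanity check: the class is inhabited (the complex numbers form a complex Hilbert space).\<close>

instantiation complex :: complex_hilbert
begin
definition scaleC_complex :: "complex \<Rightarrow> complex \<Rightarrow> complex" where "scaleC_complex a x = a * x"
definition cinner_complex :: "complex \<Rightarrow> complex \<Rightarrow> complex" where "cinner_complex x y = cnj x * y"
instance
  proof
  fix a b :: complex and x y z :: complex and r :: real
  show "scaleC a (x + y) = scaleC a x + scaleC a y" by (simp add: scaleC_complex_def distrib_left)
  show "scaleC (a + b) x = scaleC a x + scaleC b x" by (simp add: scaleC_complex_def distrib_right)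
  show "scaleC a (scaleC b x) = scaleC (a * b) x" by (simp add: scaleC_complex_def mult.assoc)
  show "scaleC 1 x = x" by (simp add: scaleC_complex_def)
  show "scaleR r x = scaleC (complex_of_real r) x" by (simp add: scaleC_complex_def scaleR_conv_of_real)
  show "cinner x y = cnj (cinner y x)" by (simp add: cinner_complex_def mult.commute)
  show "cinner (x + y) z = cinner x z + cinner y z" by (simp add: cinner_complex_def distrib_right)
  show "cinner (scaleC a x) y = cnj a * cinner x y" by (simp add: cinner_complex_def scaleC_complex_def mult.assoc)
  show "complex_of_real ((norm x)\<^sup>2) = cinner x x" by (simp add: cinner_complex_def complex_norm_square[symmetric] mult.commute)
qed
end

abbreviation cdependent :: "'a::complex_hilbert set \<Rightarrow> bool" where
  "cdependent \<equiv> module.dependent scaleC"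

abbreviation csubspace :: "'a::complex_hilbert set \<Rightarrow> bool" where
  "csubspace \<equiv> module.subspace scaleC"

definition hdim_le :: "'a::complex_hilbert set \<Rightarrow> nat \<Rightarrow> bool" where
  "hdim_le S k \<longleftrightarrow> (\<forall>B. B \<subseteq> S \<and> \<not> cdependent B \<longrightarrow> finite B \<and> card B \<le> k)"

text \<open>Orthogonal projections (self-adjoint idempotent linear operators; these are
automatically bounded).\<close>

definition is_projection :: "('a::complex_hilbert \<Rightarrow> 'a) \<Rightarrow> bool" where
  "is_projection P \<longleftrightarrow>
     (\<forall>x y. P (x + y) = P x + P y) \<and> (\<forall>a x. P (scaleC a x) = scaleC a (P x)) \<and>
     (\<forall>x. P (P x) = P x) \<and> (\<forall>x y. cinner (P x) y = cinner x (P y))"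

definition par :: "nat \<Rightarrow> nat \<Rightarrow> nat" where
  "par k i = (\<Sum>l\<le>k. if bit i l then 1 else 0) mod 2"

definition hcU :: "nat \<Rightarrow> nat set" where
  "hcU n = {i. i < 2 ^ n \<and> par (n - 1) i = 0}"

definition hcV :: "nat \<Rightarrow> nat set" where
  "hcV n = {j. j < 2 ^ n \<and> par (n - 1) j = 1}"

definition hc_adj :: "nat \<Rightarrow> nat \<Rightarrow> nat \<Rightarrow> bool" where
  "hc_adj n u v \<longleftrightarrow> (\<exists>k<n. v = flip_bit k u)"

text \<open>By the universal property, representations of the universal unital C*-algebra
C*(Q_n) on a Hilbert space H correspond exactly to families (rho(p_x))_x of projections on H
satisfying the defining relations; we represent a representation by this family.\<close>

definition hc_rep :: "nat \<Rightarrow> (nat \<Rightarrow> 'a::complex_hilbert \<Rightarrow> 'a) \<Rightarrow> bool" where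
  "hc_rep n p \<longleftrightarrow>
     (\<forall>x \<in> hcU n \<union> hcV n. is_projection (p x)) \<and>
     (\<forall>h. (\<Sum>u\<in>hcU n. p u h) = h) \<and>
     (\<forall>h. (\<Sum>v\<in>hcV n. p v h) = h) \<and>
     (\<forall>u\<in>hcU n. \<forall>v\<in>hcV n. \<not> hc_adj n u v \<longrightarrow> (\<forall>h. p u (p v h) = 0))"

text \<open>Irreducibility: the Hilbert space is nonzero and the only closed subspaces invariant
under the representation (equivalently under all generators p_x) are {0} and H.\<close>

definition hc_irreducible :: "nat \<Rightarrow> (nat \<Rightarrow> 'a::complex_hilbert \<Rightarrow> 'a) \<Rightarrow> bool" where
  "hc_irreducible n p \<longleftrightarrow>
     (UNIV :: 'a set) \<noteq> {0} \<and>
     (\<forall>K. csubspace K \<and> closed K \<and> (\<forall>x \<in> hcU n \<union> hcV n. p x ` K \<subseteq> K)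
        \<longrightarrow> K = {0} \<or> K = UNIV)"

end

theory Submission
  imports Defs
begin

interpretation cvs: vector_space "scaleC :: complex \<Rightarrow> 'a::complex_hilbert \<Rightarrow> 'a"
  by unfold_locales (auto simp: scaleC_add_right scaleC_add_left scaleC_scaleC scaleC_one)

lemma cvs_module: "module (scaleC :: complex \<Rightarrow> 'a::complex_hilbert \<Rightarrow> 'a)"
  by unfold_locales (auto simp: scaleC_add_right scaleC_add_left scaleC_scaleC scaleC_one)

lemma scaleC_zero_right[simp]: "scaleC a (0::'a::complex_hilbert) = 0"
  by (rule cvs.scale_zero_right)
lemma scaleC_zero_left[simp]: "scaleC 0 (x::'a::complex_hilbert) = 0"
  by (rule cvs.scale_zero_left)
lemma scaleC_minus_left: "scaleC (- a) (x::'a::complex_hilbert) = - scaleC a x"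
  by (rule cvs.scale_minus_left)
lemma scaleC_minus_right: "scaleC a (- x::'a::complex_hilbert) = - scaleC a x"
  by (rule cvs.scale_minus_right)
lemma scaleC_diff_right: "scaleC a (x - y::'a::complex_hilbert) = scaleC a x - scaleC a y"
  by (rule cvs.scale_right_diff_distrib)
lemma scaleC_diff_left: "scaleC (a - b) (x::'a::complex_hilbert) = scaleC a x - scaleC b x"
  by (rule cvs.scale_left_diff_distrib)
lemma scaleC_sum_right: "scaleC a (\<Sum>i\<in>A. f i) = (\<Sum>i\<in>A. scaleC a (f i::'a::complex_hilbert))"
  by (rule cvs.scale_sum_right)
lemma scaleC_of_real: "scaleC (complex_of_real r) (x::'a::complex_hilbert) = r *\<^sub>R x"
  by (simp add: scaleR_scaleC)

lemma cinner_add_right: "cinner x (y + z) = cinner x y + cinner (x::'a::complex_hilbert) z"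
  by (metis cinner_commute cinner_add_left complex_cnj_add)
lemma cinner_scaleC_right: "cinner x (scaleC a y) = a * cinner (x::'a::complex_hilbert) y"
  by (metis cinner_commute cinner_scaleC_left complex_cnj_cnj complex_cnj_mult)
lemma cinner_zero_left[simp]: "cinner 0 (x::'a::complex_hilbert) = 0"
  by (metis add_cancel_right_left add_cancel_left_left cinner_add_left)
lemma cinner_zero_right[simp]: "cinner (x::'a::complex_hilbert) 0 = 0"
  by (metis cinner_commute cinner_zero_left complex_cnj_zero)
lemma cinner_minus_left: "cinner (- x) (y::'a::complex_hilbert) = - cinner x y"
  by (metis add.right_inverse cinner_add_left cinner_zero_left add_eq_0_iff)
lemma cinner_minus_right: "cinner x (- y::'a::complex_hilbert) = - cinner x y"
  by (metis add.right_inverse cinner_add_right cinner_zero_right add_eq_0_iff)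
lemma cinner_diff_left: "cinner (x - y) (z::'a::complex_hilbert) = cinner x z - cinner y z"
  by (simp only: diff_conv_add_uminus cinner_add_left cinner_minus_left)
lemma cinner_diff_right: "cinner x (y - z::'a::complex_hilbert) = cinner x y - cinner x z"
  by (simp only: diff_conv_add_uminus cinner_add_right cinner_minus_right)
lemma cinner_sum_left: "cinner (\<Sum>i\<in>A. f i) (y::'a::complex_hilbert) = (\<Sum>i\<in>A. cinner (f i) y)"
  by (induction A rule: infinite_finite_induct) (auto simp: cinner_add_left)
lemma cinner_sum_right: "cinner y (\<Sum>i\<in>A. f i) = (\<Sum>i\<in>A. cinner (y::'a::complex_hilbert) (f i))"
  by (induction A rule: infinite_finite_induct) (auto simp: cinner_add_right)

lemma cinner_self: "cinner x (x::'a::complex_hilbert) = complex_of_real ((norm x)\<^sup>2)"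
  by (rule norm_cinner[symmetric])
lemma Re_cinner_self: "Re (cinner x (x::'a::complex_hilbert)) = (norm x)\<^sup>2"
  by (simp add: cinner_self)
lemma cinner_self_eq_0: "cinner x (x::'a::complex_hilbert) = 0 \<longleftrightarrow> x = 0"
  by (simp add: cinner_self)

lemma norm_scaleC: "norm (scaleC a (x::'a::complex_hilbert)) = cmod a * norm x"
proof -
  have 1: "complex_of_real ((norm (scaleC a x))\<^sup>2) = cnj a * a * complex_of_real ((norm x)\<^sup>2)"
    unfolding cinner_self[symmetric] by (simp add: cinner_scaleC_left cinner_scaleC_right)
  have 2: "cnj a * a = complex_of_real ((cmod a)\<^sup>2)"
    by (metis complex_norm_square mult.commute of_real_power)
  have "complex_of_real ((norm (scaleC a x))\<^sup>2) = complex_of_real ((cmod a * norm x)\<^sup>2)"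
    by (simp only: 1 2 of_real_mult power_mult_distrib)
  then have "(norm (scaleC a x))\<^sup>2 = (cmod a * norm x)\<^sup>2"
    by (simp only: of_real_eq_iff)
  then show ?thesis by (rule power2_eq_imp_eq) simp_all
qed

lemma cinner_real_selfadj:
  assumes "\<And>x y. cinner (f x) y = cinner x (f y)"
  shows "cinner x (f x) = complex_of_real (Re (cinner x (f (x::'a::complex_hilbert))))"
proof -
  have "cnj (cinner x (f x)) = cinner x (f x)" using cinner_commute[of x "f x"] assms[of x x] by simp
  then have "Im (cinner x (f x)) = 0" by (simp add: complex_eq_iff)
  then show ?thesis by (simp add: complex_eq_iff)
qed

lemma cauchy_schwarz_c: "cmod (cinner x y) \<le> norm x * norm (y::'a::complex_hilbert)"
proof (cases "y = 0")
  case True then show ?thesis by simp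
next
  case False
  define t where "t = cinner y x / cinner y y"
  have yy: "cinner y y = complex_of_real ((norm y)\<^sup>2)" by (rule cinner_self)
  have ny: "norm y > 0" using False by simp
  have "complex_of_real ((norm (x - scaleC t y))\<^sup>2) = cinner (x - scaleC t y) (x - scaleC t y)"
    by (rule norm_cinner)
  also have "\<dots> = cinner x x - t * cinner x y - cnj t * cinner y x + cnj t * t * cinner y y"
    by (simp add: cinner_diff_left cinner_diff_right cinner_scaleC_left cinner_scaleC_right algebra_simps)
  also have "\<dots> = cinner x x - cnj (cinner y x) * cinner y x / cinner y y"
  proof -
    have b0: "cinner y y \<noteq> 0" using False by (simp add: cinner_self_eq_0)
    have cb: "cnj (cinner y y) = cinner y y" by (simp add: yy)
    have gen: "\<And>b a xx::complex. b \<noteq> 0 \<Longrightarrow> cnj b = b \<Longrightarrow> xx - (a/b) * cnj a - cnj (a/b) * a + cnj (a/b) * (a/b) * b = xx - cnj a * a / b"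
      by (simp add: field_simps)
    show ?thesis unfolding t_def cinner_commute[of x y] by (rule gen[OF b0 cb])
  qed
  finally have *: "complex_of_real ((norm (x - scaleC t y))\<^sup>2) = cinner x x - cnj (cinner y x) * cinner y x / cinner y y" .
  have cc: "cnj (cinner y x) * cinner y x = complex_of_real ((cmod (cinner y x))\<^sup>2)"
    by (metis complex_norm_square mult.commute of_real_power)
  have e2: "cinner x x - cnj (cinner y x) * cinner y x / cinner y y = complex_of_real ((norm x)\<^sup>2 - (cmod (cinner y x))\<^sup>2 / (norm y)\<^sup>2)"
    by (simp only: of_real_diff of_real_divide cinner_self[of x] yy cc)
  have "complex_of_real ((norm (x - scaleC t y))\<^sup>2) = complex_of_real ((norm x)\<^sup>2 - (cmod (cinner y x))\<^sup>2 / (norm y)\<^sup>2)"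
    by (simp only: * e2)
  then have "(norm (x - scaleC t y))\<^sup>2 = (norm x)\<^sup>2 - (cmod (cinner y x))\<^sup>2 / (norm y)\<^sup>2"
    by (simp only: of_real_eq_iff)
  then have "(cmod (cinner y x))\<^sup>2 / (norm y)\<^sup>2 \<le> (norm x)\<^sup>2"
    by (metis diff_ge_0_iff_ge zero_le_power2)
  then have "(cmod (cinner y x))\<^sup>2 \<le> (norm x * norm y)\<^sup>2"
    using ny by (simp add: field_simps power_mult_distrib)
  then have "cmod (cinner y x) \<le> norm x * norm y"
    using power2_le_imp_le by fastforce
  then show ?thesis unfolding cinner_commute[of x y] complex_mod_cnj .
qed

definition clin :: "('a::complex_hilbert \<Rightarrow> 'a) \<Rightarrow> bool" where
  "clin f \<longleftrightarrow> (\<forall>x y. f (x + y) = f x + f y) \<and> (\<forall>a x. f (scaleC a x) = scaleC a (f x)) \<and>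
     (\<exists>K. \<forall>x. norm (f x) \<le> norm x * K)"

definition sadj :: "('a::complex_hilbert \<Rightarrow> 'a) \<Rightarrow> bool" where
  "sadj f \<longleftrightarrow> (\<forall>x y. cinner (f x) y = cinner x (f y))"

lemma clinD_add: "clin f \<Longrightarrow> f (x + y) = f x + f y" by (simp add: clin_def)
lemma clinD_scale: "clin f \<Longrightarrow> f (scaleC a x) = scaleC a (f x)" by (simp add: clin_def)
lemma clinD_bound: "clin f \<Longrightarrow> \<exists>K. \<forall>x. norm (f x) \<le> norm x * K" by (simp add: clin_def)

lemma clin_bounded_linear: "clin f \<Longrightarrow> bounded_linear f"
proof -
  assume f: "clin f"
  then obtain K where K: "\<And>x. norm (f x) \<le> norm x * K" by (auto simp: clin_def)
  show "bounded_linear f"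
    by (rule bounded_linear_intro[where K=K]) (auto simp: clinD_add[OF f] clinD_scale[OF f] scaleR_scaleC K)
qed

lemma clin_zero: "clin f \<Longrightarrow> f 0 = 0"
proof -
  assume f: "clin f"
  have "f 0 = f 0 + f 0" using clinD_add[OF f, of 0 0] by simp
  then show ?thesis by simp
qed
lemma clin_minus: "clin f \<Longrightarrow> f (- x) = - f x"
proof -
  assume f: "clin f"
  have "f (- x) + f x = 0" using clinD_add[OF f, of "- x" x] clin_zero[OF f] by simp
  then show ?thesis by (simp add: eq_neg_iff_add_eq_0)
qed
lemma clin_diff: "clin f \<Longrightarrow> f (x - y) = f x - f y"
  by (simp only: diff_conv_add_uminus clinD_add clin_minus)
lemma clin_sum: "clin f \<Longrightarrow> f (\<Sum>i\<in>A. g i) = (\<Sum>i\<in>A. f (g i))"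
  by (induction A rule: infinite_finite_induct) (auto simp: clin_zero clinD_add)

lemma clin_cont: "clin f \<Longrightarrow> continuous_on S f"
  using clin_bounded_linear linear_continuous_on by blast
lemma clin_tendsto: "clin f \<Longrightarrow> (g \<longlongrightarrow> l) F \<Longrightarrow> ((\<lambda>x. f (g x)) \<longlongrightarrow> f l) F"
  using clin_bounded_linear bounded_linear.tendsto by blast
lemma clin_sums: "clin f \<Longrightarrow> g sums l \<Longrightarrow> (\<lambda>n. f (g n)) sums (f l)"
  using clin_bounded_linear bounded_linear.sums by blast

lemma clin_id: "clin (\<lambda>x. x)"
  by (auto simp: clin_def intro: exI[of _ 1])
lemma clin_const0: "clin (\<lambda>x. 0)"
  by (auto simp: clin_def intro: exI[of _ 0])
lemma clin_comp: "clin f \<Longrightarrow> clin g \<Longrightarrow> clin (\<lambda>x. f (g x))"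
proof -
  assume f: "clin f" and g: "clin g"
  obtain K where K: "\<And>x. norm (f x) \<le> norm x * K" using f by (auto simp: clin_def)
  obtain L where L: "\<And>x. norm (g x) \<le> norm x * L" using g by (auto simp: clin_def)
  have "norm (f (g x)) \<le> norm x * (L * \<bar>K\<bar>)" for x
  proof -
    have "norm (f (g x)) \<le> norm (g x) * K" by (rule K)
    also have "\<dots> \<le> norm (g x) * \<bar>K\<bar>" by (rule mult_left_mono) simp_all
    also have "\<dots> \<le> (norm x * L) * \<bar>K\<bar>" using L[of x] by (rule mult_right_mono) simp
    finally show ?thesis by (simp add: mult.assoc)
  qed
  then show ?thesis using f g by (auto simp: clin_def)
qed
lemma clin_plus: "clin f \<Longrightarrow> clin g \<Longrightarrow> clin (\<lambda>x. f x + g x)"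
proof -
  assume f: "clin f" and g: "clin g"
  obtain K where K: "\<And>x. norm (f x) \<le> norm x * K" using f by (auto simp: clin_def)
  obtain L where L: "\<And>x. norm (g x) \<le> norm x * L" using g by (auto simp: clin_def)
  have "norm (f x + g x) \<le> norm x * (K + L)" for x
    using norm_triangle_ineq[of "f x" "g x"] K[of x] L[of x] by (simp add: algebra_simps)
  then show ?thesis using f g by (auto simp: clin_def scaleC_add_right)
qed
lemma clin_smult: "clin f \<Longrightarrow> clin (\<lambda>x. scaleC c (f x))"
proof -
  assume f: "clin f"
  obtain K where K: "\<And>x. norm (f x) \<le> norm x * K" using f by (auto simp: clin_def)
  have "norm (scaleC c (f x)) \<le> norm x * (cmod c * K)" for x
  proof -
    have "cmod c * norm (f x) \<le> cmod c * (norm x * K)" using K[of x] by (rule mult_left_mono) simp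
    then show ?thesis by (simp add: norm_scaleC mult.left_commute)
  qed
  then have b: "\<exists>K. \<forall>x. norm (scaleC c (f x)) \<le> norm x * K" by blast
  show ?thesis unfolding clin_def
    using b clinD_add[OF f] clinD_scale[OF f] by (auto simp: scaleC_add_right scaleC_scaleC mult.commute)
qed
lemma clin_uminus: "clin f \<Longrightarrow> clin (\<lambda>x. - f x)"
  using clin_smult[of f "-1"] by (simp add: scaleC_minus_left scaleC_one)
lemma clin_minus2: "clin f \<Longrightarrow> clin g \<Longrightarrow> clin (\<lambda>x. f x - g x)"
  using clin_plus[of f "\<lambda>x. - g x"] clin_uminus[of g] by simp

lemma sadjD: "sadj f \<Longrightarrow> cinner (f x) y = cinner x (f y)" by (simp add: sadj_def)

lemma cinner_right_bl: "bounded_linear (\<lambda>y. cinner (x::'a::complex_hilbert) y)"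
proof (rule bounded_linear_intro[where K="norm x"])
  show "cinner x (y + z) = cinner x y + cinner x z" for y z by (rule cinner_add_right)
  show "cinner x (r *\<^sub>R y) = r *\<^sub>R cinner x y" for r and y :: 'a
    by (simp only: scaleR_scaleC[of r y] cinner_scaleC_right scaleR_conv_of_real)
  show "norm (cinner x y) \<le> norm y * norm x" for y
    using cauchy_schwarz_c[of x y] by (simp add: mult.commute)
qed
lemma cinner_left_bl: "bounded_linear (\<lambda>y. cinner y (x::'a::complex_hilbert))"
proof (rule bounded_linear_intro[where K="norm x"])
  show "cinner (y + z) x = cinner y x + cinner z x" for y z by (rule cinner_add_left)
  show "cinner (r *\<^sub>R y) x = r *\<^sub>R cinner y x" for r and y :: 'a
    by (simp only: scaleR_scaleC[of r y] cinner_scaleC_left scaleR_conv_of_real complex_cnj_complex_of_real)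
  show "norm (cinner y x) \<le> norm y * norm x" for y
    using cauchy_schwarz_c[of y x] by simp
qed

lemma proj_clin:
  assumes "is_projection P"
  shows "clin P" "sadj P" "norm (P x) \<le> norm x" "P (P x) = P x"
proof -
  have a: "\<And>x y. P (x + y) = P x + P y" "\<And>a x. P (scaleC a x) = scaleC a (P x)"
    "\<And>x. P (P x) = P x" "\<And>x y. cinner (P x) y = cinner x (P y)"
    using assms by (auto simp: is_projection_def)
  have nb: "norm (P x) \<le> norm x" for x
  proof -
    have "complex_of_real ((norm (P x))\<^sup>2) = cinner (P x) (P x)" by (rule norm_cinner)
    also have "\<dots> = cinner x (P x)" by (simp add: a(3,4))
    finally have e: "complex_of_real ((norm (P x))\<^sup>2) = cinner x (P x)" .
    have "cmod (complex_of_real ((norm (P x))\<^sup>2)) = \<bar>(norm (P x))\<^sup>2\<bar>" by (rule norm_of_real)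
    then have "(norm (P x))\<^sup>2 = cmod (cinner x (P x))" by (simp only: e abs_power2)
    also have "\<dots> \<le> norm x * norm (P x)" by (rule cauchy_schwarz_c)
    finally have "norm (P x) * norm (P x) \<le> norm x * norm (P x)" by (simp add: power2_eq_square)
    then show ?thesis
      by (cases "norm (P x) = 0") (auto simp: mult_le_cancel_right)
  qed
  show "clin P" unfolding clin_def using a nb by (auto intro!: exI[of _ 1])
  show "sadj P" using a by (simp add: sadj_def)
  show "norm (P x) \<le> norm x" by (rule nb)
  show "P (P x) = P x" by (rule a(3))
qed

function cc :: "nat \<Rightarrow> real" where
  "cc 0 = 0"
| "cc (Suc 0) = 1/2"
| "cc (Suc (Suc m)) = (\<Sum>i\<in>{1..Suc m}. cc i * cc (Suc (Suc m) - i)) / 2"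
  by pat_completeness auto
termination by (relation "Wellfounded.measure id") auto

lemma cc_nonneg: "cc k \<ge> 0"
proof (induction k rule: less_induct)
  case (less k)
  show ?case
  proof (cases k)
    case 0 then show ?thesis by simp
  next
    case (Suc m)
    show ?thesis
    proof (cases m)
      case 0 with Suc show ?thesis by simp
    next
      case (Suc l)
      have "(\<Sum>i\<in>{1..Suc l}. cc i * cc (Suc (Suc l) - i)) \<ge> 0"
        by (rule sum_nonneg) (use less Suc \<open>k = Suc m\<close> in \<open>auto intro!: mult_nonneg_nonneg\<close>)
      with Suc \<open>k = Suc m\<close> show ?thesis by simp
    qed
  qed
qed

definition ca :: "nat \<Rightarrow> real" where "ca m = (\<Sum>i\<le>m. cc i * cc (m - i))"

lemma ca_eq: "ca m = 2 * cc m - (if m = 1 then 1 else 0)"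
proof (cases m)
  case 0 then show ?thesis by (simp add: ca_def)
next
  case (Suc l)
  show ?thesis
  proof (cases l)
    case 0 with Suc show ?thesis by (simp add: ca_def)
  next
    case (Suc k)
    have m: "m = Suc (Suc k)" using Suc \<open>m = Suc l\<close> by simp
    have split: "{..m} = insert 0 (insert m {1..Suc k})" using m by auto
    have "ca m = (\<Sum>i\<in>insert 0 (insert m {1..Suc k}). cc i * cc (m - i))"
      unfolding ca_def split[symmetric] ..
    also have "\<dots> = cc 0 * cc m + (cc m * cc 0 + (\<Sum>i\<in>{1..Suc k}. cc i * cc (m - i)))"
      using m by (subst sum.insert; auto)+
    also have "\<dots> = (\<Sum>i\<in>{1..Suc k}. cc i * cc (m - i))" by simp
    also have "\<dots> = 2 * cc m" using m by simp
    finally show ?thesis using m by simp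
  qed
qed

lemma ca_tri: "(\<Sum>m<N. ca m) = (\<Sum>(i,j)\<in>{(i,j). i+j < N}. cc i * cc j)"
  unfolding ca_def by (rule sum.triangle_reindex[symmetric])

lemma cc_ne0: "cc a \<noteq> 0 \<Longrightarrow> a \<ge> 1"
  by (cases a) auto

lemma tri_le_sq: "(\<Sum>(i,j)\<in>{(i,j). i+j < Suc N}. cc i * cc j) \<le> (\<Sum>k<N. cc k)\<^sup>2"
proof -
  let ?g = "\<lambda>(i,j). cc i * cc j"
  let ?T = "{(i,j). i+j < Suc N}"
  let ?T' = "{(i,j). i+j < Suc N \<and> i \<ge> 1 \<and> j \<ge> 1}"
  have fT: "finite ?T"
    by (rule finite_subset[of _ "{..N} \<times> {..N}"]) auto
  have "sum ?g ?T = sum ?g ?T'"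
    by (rule sum.mono_neutral_right) (use fT cc_ne0 in auto)
  also have "\<dots> \<le> sum ?g ({..<N} \<times> {..<N})"
    by (rule sum_mono2) (auto simp: cc_nonneg)
  also have "\<dots> = (\<Sum>k<N. cc k)\<^sup>2"
    by (simp add: sum.cartesian_product[symmetric] sum_product power2_eq_square)
  finally show ?thesis .
qed

lemma ca_sum: "N \<ge> 2 \<Longrightarrow> (\<Sum>m<N. ca m) = 2 * (\<Sum>m<N. cc m) - 1"
proof -
  assume N: "N \<ge> 2"
  have "(\<Sum>m<N. ca m) = (\<Sum>m<N. 2 * cc m) - (\<Sum>m<N. if m = 1 then 1 else 0)"
    by (simp add: ca_eq sum_subtractf)
  also have "(\<Sum>m<N. (if m = 1 then 1 else 0::real)) = 1"
    using N by (simp add: sum.delta)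
  finally show ?thesis by (simp add: sum_distrib_left)
qed

lemma cc_partial_le1: "(\<Sum>k<N. cc k) \<le> 1"
proof (induction N)
  case 0 then show ?case by simp
next
  case (Suc N)
  show ?case
  proof (cases "N = 0")
    case True then show ?thesis by simp
  next
    case False
    have e: "(\<Sum>m<Suc N. ca m) = 2 * (\<Sum>m<Suc N. cc m) - 1" using False by (intro ca_sum) simp
    have "2 * (\<Sum>m<Suc N. cc m) - 1 = (\<Sum>m<Suc N. ca m)" by (simp only: e)
    also have "\<dots> \<le> (\<Sum>k<N. cc k)\<^sup>2" unfolding ca_tri by (rule tri_le_sq)
    also have "\<dots> \<le> 1"
    proof -
      have "0 \<le> (\<Sum>k<N. cc k)" by (rule sum_nonneg) (simp add: cc_nonneg)
      then show ?thesis using Suc.IH by (simp add: power_le_one)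
    qed
    finally show ?thesis by simp
  qed
qed

lemma cc_summable: "summable cc"
  by (rule summableI_nonneg_bounded[where x=1]) (auto simp: cc_nonneg cc_partial_le1)

lemma cc_suminf: "suminf cc = 1"
proof -
  let ?s = "suminf cc"
  have ns: "summable (\<lambda>k. norm (cc k))" using cc_summable cc_nonneg by simp
  have "(\<lambda>k. \<Sum>i\<le>k. cc i * cc (k - i)) sums (?s * ?s)"
    by (rule Cauchy_product_sums[OF ns ns])
  then have s1: "ca sums (?s * ?s)" unfolding ca_def .
  have "(\<lambda>m. 2 * cc m) sums (2 * ?s)" using cc_summable by (intro sums_mult) (simp add: summable_sums)
  moreover have "(\<lambda>m. if m = 1 then 1 else 0::real) sums 1"
    using sums_single[of 1 "\<lambda>_. 1::real"] by simp
  ultimately have "(\<lambda>m. 2 * cc m - (if m = 1 then 1 else 0)) sums (2 * ?s - 1)"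
    by (rule sums_diff)
  then have s2: "ca sums (2 * ?s - 1)" by (simp add: ca_eq[abs_def])
  from s1 s2 have "?s * ?s = 2 * ?s - 1" by (rule sums_unique2)
  then have "(?s - 1)\<^sup>2 = 0" by (simp add: power2_eq_square algebra_simps)
  then show ?thesis by simp
qed

lemma cc_partial_tendsto: "(\<lambda>N. \<Sum>k<N. cc k) \<longlonglongrightarrow> 1"
  using cc_summable cc_suminf summable_LIMSEQ by fastforce

lemma clin_scaleR: "clin f \<Longrightarrow> f (r *\<^sub>R x) = r *\<^sub>R f (x::'a::complex_hilbert)"
  by (simp only: scaleR_scaleC clinD_scale)

lemma clin_sumf: "(\<And>k. k \<in> A \<Longrightarrow> clin (f k)) \<Longrightarrow> clin (\<lambda>h. \<Sum>k\<in>A. f k h)"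
proof (induction A rule: infinite_finite_induct)
  case (infinite A) then show ?case by (simp add: clin_const0)
next
  case empty then show ?case by (simp add: clin_const0)
next
  case (insert x F)
  then show ?case by (simp add: clin_plus)
qed

lemma clin_smultR: "clin f \<Longrightarrow> clin (\<lambda>h. r *\<^sub>R f h)"
  using clin_smult[of f "complex_of_real r"] by (simp add: scaleR_scaleC)

lemma pow_clin: "clin (B::'a::complex_hilbert \<Rightarrow> 'a) \<Longrightarrow> clin (B ^^ k)"
proof (induction k)
  case 0 then show ?case by (simp add: clin_id id_def)
next
  case (Suc k) then show ?case using clin_comp[of B "B ^^ k"] by (simp add: comp_def)
qed

lemma pow_norm:
  fixes B :: "'a::complex_hilbert \<Rightarrow> 'a"
  assumes "\<And>h. norm (B h) \<le> norm h" shows "norm ((B ^^ k) h) \<le> norm h"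
proof (induction k arbitrary: h)
  case 0 then show ?case by simp
next
  case (Suc k)
  have "norm ((B ^^ Suc k) h) = norm (B ((B ^^ k) h))" by simp
  also have "\<dots> \<le> norm ((B ^^ k) h)" by (rule assms)
  also have "\<dots> \<le> norm h" by (rule Suc.IH)
  finally show ?case .
qed

lemma Re_ofreal_mult: "Re (complex_of_real r * z) = r * Re z"
  by simp

lemma pow_sadj:
  fixes B :: "'a::complex_hilbert \<Rightarrow> 'a"
  assumes "sadj B" shows "sadj (B ^^ k)"
proof (induction k)
  case 0 then show ?case by (simp add: sadj_def)
next
  case (Suc k)
  have "cinner ((B ^^ Suc k) x) y = cinner x ((B ^^ Suc k) y)" for x y
  proof -
    have "cinner ((B ^^ Suc k) x) y = cinner (B ((B ^^ k) x)) y" by simp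
    also have "\<dots> = cinner ((B ^^ k) x) (B y)" by (rule sadjD[OF assms])
    also have "\<dots> = cinner x ((B ^^ k) (B y))" by (rule sadjD[OF Suc.IH])
    also have "(B ^^ k) (B y) = (B ^^ Suc k) y" by (simp only: funpow_Suc_right comp_def)
    finally show ?thesis .
  qed
  then show ?case by (simp add: sadj_def)
qed

lemma pow_comm: "(\<And>h. Z (B h) = B (Z h)) \<Longrightarrow> Z (((B::'a\<Rightarrow>'a) ^^ k) h) = (B ^^ k) (Z h)"
  by (induction k arbitrary: h) auto

definition sqY :: "('a::complex_hilbert \<Rightarrow> 'a) \<Rightarrow> nat \<Rightarrow> 'a \<Rightarrow> 'a" where
  "sqY B N h = (\<Sum>k<N. cc k *\<^sub>R (B ^^ k) h)"

definition sqC :: "('a::complex_hilbert \<Rightarrow> 'a) \<Rightarrow> 'a \<Rightarrow> 'a" where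
  "sqC B h = (\<Sum>k. cc k *\<^sub>R (B ^^ k) h)"

context
  fixes B :: "'a::complex_hilbert \<Rightarrow> 'a"
  assumes Bl: "clin B" and Bn: "\<And>h. norm (B h) \<le> norm h"
begin

lemma sq_summable: "summable (\<lambda>k. cc k *\<^sub>R (B ^^ k) h)"
proof (rule summable_comparison_test')
  show "summable (\<lambda>k. cc k * norm h)" using cc_summable by (rule summable_mult2)
  show "norm (cc k *\<^sub>R (B ^^ k) h) \<le> cc k * norm h" for k
    using pow_norm[OF Bn, of k h] cc_nonneg[of k] by (simp add: mult_left_mono)
qed

lemma sq_sums: "(\<lambda>k. cc k *\<^sub>R (B ^^ k) h) sums sqC B h"
  unfolding sqC_def using sq_summable by (rule summable_sums)

lemma sqY_tendsto: "(\<lambda>N. sqY B N h) \<longlonglongrightarrow> sqC B h"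
  unfolding sqY_def sqC_def using sq_summable by (rule summable_LIMSEQ)

lemma sqY_norm: "norm (sqY B N h) \<le> norm h"
proof -
  have "norm (sqY B N h) \<le> (\<Sum>k<N. norm (cc k *\<^sub>R (B ^^ k) h))"
    unfolding sqY_def by (rule norm_sum)
  also have "\<dots> \<le> (\<Sum>k<N. cc k * norm h)"
    by (rule sum_mono) (use pow_norm[OF Bn] cc_nonneg in \<open>simp add: mult_left_mono\<close>)
  also have "\<dots> = (\<Sum>k<N. cc k) * norm h" by (simp add: sum_distrib_right)
  also have "\<dots> \<le> 1 * norm h" by (rule mult_right_mono) (simp_all add: cc_partial_le1)
  finally show ?thesis by simp
qed

lemma sqC_norm: "norm (sqC B h) \<le> norm h"
proof -
  have "(\<lambda>N. norm (sqY B N h)) \<longlonglongrightarrow> norm (sqC B h)"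
    by (rule tendsto_norm) (rule sqY_tendsto)
  then show ?thesis by (rule LIMSEQ_le_const2) (use sqY_norm in auto)
qed

lemma sqY_clin: "clin (sqY B N)"
proof -
  have "clin (\<lambda>h. \<Sum>k\<in>{..<N}. cc k *\<^sub>R (B ^^ k) h)"
    by (rule clin_sumf) (intro clin_smultR pow_clin Bl)
  then show ?thesis unfolding sqY_def[abs_def] .
qed

lemma sqC_apply: "clin Z \<Longrightarrow> (\<lambda>k. cc k *\<^sub>R Z ((B ^^ k) h)) sums Z (sqC B h)"
proof -
  assume Z: "clin Z"
  have "(\<lambda>k. Z (cc k *\<^sub>R (B ^^ k) h)) sums Z (sqC B h)" by (rule clin_sums[OF Z sq_sums])
  then show ?thesis by (simp add: clin_scaleR[OF Z])
qed

lemma sqC_comm: "clin Z \<Longrightarrow> (\<And>h. Z (B h) = B (Z h)) \<Longrightarrow> Z (sqC B h) = sqC B (Z h)"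
proof -
  assume Z: "clin Z" and c: "\<And>h. Z (B h) = B (Z h)"
  have "(\<lambda>k. cc k *\<^sub>R Z ((B ^^ k) h)) sums Z (sqC B h)" by (rule sqC_apply[OF Z])
  moreover have "(\<lambda>k. cc k *\<^sub>R Z ((B ^^ k) h)) sums sqC B (Z h)"
    using sq_sums[of "Z h"] by (simp add: pow_comm[of Z B, OF c])
  ultimately show ?thesis by (rule sums_unique2)
qed

lemma sqC_clin: "clin (sqC B)"
proof -
  have add: "sqC B (x + y) = sqC B x + sqC B y" for x y
  proof -
    have "(\<lambda>k. cc k *\<^sub>R (B ^^ k) x + cc k *\<^sub>R (B ^^ k) y) sums sqC B (x + y)"
      using sq_sums[of "x + y"] by (simp add: clinD_add[OF pow_clin[OF Bl]] scaleR_add_right)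
    moreover have "(\<lambda>k. cc k *\<^sub>R (B ^^ k) x + cc k *\<^sub>R (B ^^ k) y) sums (sqC B x + sqC B y)"
      by (rule sums_add) (rule sq_sums)+
    ultimately show ?thesis by (rule sums_unique2)
  qed
  have sc: "sqC B (scaleC a x) = scaleC a (sqC B x)" for a x
  proof -
    have Z: "clin (\<lambda>v. scaleC a (v::'a))" using clin_smult[OF clin_id] .
    have "(\<lambda>k. scaleC a (cc k *\<^sub>R (B ^^ k) x)) sums sqC B (scaleC a x)"
      using sq_sums[of "scaleC a x"] by (simp add: clinD_scale[OF pow_clin[OF Bl]] clin_scaleR[OF Z])
    moreover have "(\<lambda>k. scaleC a (cc k *\<^sub>R (B ^^ k) x)) sums scaleC a (sqC B x)"
      by (rule clin_sums[OF Z sq_sums])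
    ultimately show ?thesis by (rule sums_unique2)
  qed
  show ?thesis unfolding clin_def using add sc sqC_norm by (auto intro!: exI[of _ 1])
qed

lemma sqC_sadj: "sadj B \<Longrightarrow> sadj (sqC B)"
proof -
  assume Bs: "sadj B"
  have "cinner (sqC B x) y = cinner x (sqC B y)" for x y
  proof -
    have "(\<lambda>k. cinner (cc k *\<^sub>R (B ^^ k) x) y) sums cinner (sqC B x) y"
      by (rule bounded_linear.sums[OF cinner_left_bl sq_sums])
    moreover have "(\<lambda>k. cinner x (cc k *\<^sub>R (B ^^ k) y)) sums cinner x (sqC B y)"
      by (rule bounded_linear.sums[OF cinner_right_bl sq_sums])
    moreover have "cinner (cc k *\<^sub>R (B ^^ k) x) y = cinner x (cc k *\<^sub>R (B ^^ k) y)" for k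
      by (simp only: scaleR_scaleC cinner_scaleC_left cinner_scaleC_right complex_cnj_complex_of_real
          sadjD[OF pow_sadj[OF Bs]])
    ultimately show ?thesis using sums_unique2 by auto
  qed
  then show ?thesis by (simp add: sadj_def)
qed

lemma sqC_re: "Re (cinner h (sqC B h)) \<le> (norm h)\<^sup>2"
proof -
  have "(\<lambda>k. cinner h (cc k *\<^sub>R (B ^^ k) h)) sums cinner h (sqC B h)"
    by (rule bounded_linear.sums[OF cinner_right_bl sq_sums])
  then have s1: "(\<lambda>k. Re (cinner h (cc k *\<^sub>R (B ^^ k) h))) sums Re (cinner h (sqC B h))"
    by (rule sums_Re)
  have s2: "(\<lambda>k. cc k * (norm h)\<^sup>2) sums (1 * (norm h)\<^sup>2)"
    by (rule sums_mult2) (use cc_summable cc_suminf summable_sums in fastforce)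
  have le: "Re (cinner h (cc k *\<^sub>R (B ^^ k) h)) \<le> cc k * (norm h)\<^sup>2" for k
  proof -
    have "Re (cinner h (cc k *\<^sub>R (B ^^ k) h)) = cc k * Re (cinner h ((B ^^ k) h))"
      by (simp only: scaleR_scaleC cinner_scaleC_right Re_ofreal_mult) 
    also have "Re (cinner h ((B ^^ k) h)) \<le> cmod (cinner h ((B ^^ k) h))" by (rule complex_Re_le_cmod)
    also have "\<dots> \<le> norm h * norm ((B ^^ k) h)" by (rule cauchy_schwarz_c)
    also have "\<dots> \<le> norm h * norm h" by (rule mult_left_mono) (simp_all add: pow_norm[OF Bn])
    finally show ?thesis using cc_nonneg[of k] by (simp add: power2_eq_square mult_left_mono)
  qed
  show ?thesis using sums_le[OF le s1 s2] by simp
qed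

end

context
  fixes B :: "'a::complex_hilbert \<Rightarrow> 'a"
  assumes Bl: "clin B" and Bn: "\<And>h. norm (B h) \<le> norm h"
begin

abbreviation "gg h \<equiv> (\<lambda>(i::nat,j::nat). (cc i * cc j) *\<^sub>R (B ^^ (i + j)) h)"

lemma sqY_sq: "sqY B N (sqY B N h) = (\<Sum>p\<in>{..<N} \<times> {..<N}. gg h p)"
proof -
  have "sqY B N (sqY B N h) = (\<Sum>j<N. cc j *\<^sub>R (B ^^ j) (\<Sum>k<N. cc k *\<^sub>R (B ^^ k) h))"
    unfolding sqY_def ..
  also have "\<dots> = (\<Sum>j<N. \<Sum>k<N. (cc j * cc k) *\<^sub>R (B ^^ (j + k)) h)"
    by (simp add: clin_sum[OF pow_clin[OF Bl]] clin_scaleR[OF pow_clin[OF Bl]] scaleR_sum_right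
        funpow_add)
  also have "\<dots> = (\<Sum>p\<in>{..<N} \<times> {..<N}. gg h p)"
    by (simp add: sum.cartesian_product)
  finally show ?thesis .
qed

lemma tri_part: "(\<Sum>m<N. ca m *\<^sub>R (B ^^ m) h) = (\<Sum>p\<in>{(i,j). i+j < N}. gg h p)"
proof -
  have "(\<Sum>p\<in>{(i,j). i+j < N}. gg h p) = (\<Sum>k<N. \<Sum>i\<le>k. (cc i * cc (k - i)) *\<^sub>R (B ^^ (i + (k - i))) h)"
    by (rule sum.triangle_reindex)
  also have "\<dots> = (\<Sum>k<N. \<Sum>i\<le>k. (cc i * cc (k - i)) *\<^sub>R (B ^^ k) h)"
    by (intro sum.cong refl) simp
  also have "\<dots> = (\<Sum>m<N. ca m *\<^sub>R (B ^^ m) h)"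
    by (simp add: ca_def scaleR_sum_left)
  finally show ?thesis by simp
qed

lemma ca_part: "N \<ge> 2 \<Longrightarrow> (\<Sum>m<N. ca m *\<^sub>R (B ^^ m) h) = 2 *\<^sub>R sqY B N h - B h"
proof -
  assume N: "N \<ge> 2"
  have "(\<Sum>m<N. ca m *\<^sub>R (B ^^ m) h) = (\<Sum>m<N. 2 *\<^sub>R (cc m *\<^sub>R (B ^^ m) h) - (if m = 1 then (B ^^ m) h else 0))"
    by (intro sum.cong refl) (simp add: ca_eq scaleR_diff_left)
  also have "\<dots> = 2 *\<^sub>R sqY B N h - (\<Sum>m<N. (if m = 1 then (B ^^ m) h else 0))"
    by (simp add: sum_subtractf sqY_def scaleR_sum_right)
  also have "(\<Sum>m<N. (if m = 1 then (B ^^ m) h else 0)) = B h"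
    using N by (simp add: sum.delta)
  finally show ?thesis .
qed

lemma sq_diff_bound:
  assumes N: "N \<ge> 2"
  shows "norm (sqY B N (sqY B N h) - (2 *\<^sub>R sqY B N h - B h)) \<le> (1 - (\<Sum>k<N. cc k))\<^sup>2 * norm h"
proof -
  let ?S = "{..<N} \<times> {..<N}" and ?T = "{(i,j). i+j < N}"
  have TS: "?T \<subseteq> ?S" by auto
  have fS: "finite ?S" by simp
  have "sqY B N (sqY B N h) - (2 *\<^sub>R sqY B N h - B h) = (\<Sum>p\<in>?S. gg h p) - (\<Sum>p\<in>?T. gg h p)"
    using sqY_sq tri_part ca_part[OF N] by simp
  also have "\<dots> = (\<Sum>p\<in>?S - ?T. gg h p)"
    using sum.subset_diff[OF TS fS, of "gg h"] by simp
  finally have eq: "sqY B N (sqY B N h) - (2 *\<^sub>R sqY B N h - B h) = (\<Sum>p\<in>?S - ?T. gg h p)" .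
  let ?c = "\<lambda>(i::nat,j::nat). cc i * cc j"
  have "norm (\<Sum>p\<in>?S - ?T. gg h p) \<le> (\<Sum>p\<in>?S - ?T. norm (gg h p))" by (rule norm_sum)
  also have "\<dots> \<le> (\<Sum>p\<in>?S - ?T. ?c p * norm h)"
  proof (rule sum_mono)
    fix p assume "p \<in> ?S - ?T"
    obtain i j where p: "p = (i, j)" by (cases p)
    have "norm (gg h p) = (cc i * cc j) * norm ((B ^^ (i + j)) h)"
      using cc_nonneg[of i] cc_nonneg[of j] by (simp add: p)
    also have "\<dots> \<le> (cc i * cc j) * norm h"
      by (rule mult_left_mono) (simp_all add: pow_norm[OF Bn] cc_nonneg)
    finally show "norm (gg h p) \<le> ?c p * norm h" by (simp add: p)
  qed
  also have "\<dots> = (\<Sum>p\<in>?S - ?T. ?c p) * norm h" by (simp add: sum_distrib_right)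
  also have "(\<Sum>p\<in>?S - ?T. ?c p) = (\<Sum>p\<in>?S. ?c p) - (\<Sum>p\<in>?T. ?c p)"
    using sum.subset_diff[OF TS fS, of ?c] by simp
  also have "(\<Sum>p\<in>?S. ?c p) = (\<Sum>k<N. cc k)\<^sup>2"
    by (simp add: sum.cartesian_product[symmetric] sum_product power2_eq_square)
  also have "(\<Sum>p\<in>?T. ?c p) = 2 * (\<Sum>k<N. cc k) - 1"
    using ca_tri[of N] ca_sum[OF N] by simp
  also have "(\<Sum>k<N. cc k)\<^sup>2 - (2 * (\<Sum>k<N. cc k) - 1) = (1 - (\<Sum>k<N. cc k))\<^sup>2"
    by (simp add: power2_eq_square algebra_simps)
  finally show ?thesis using eq by simp
qed

lemma sqC_sq: "sqC B (sqC B h) = 2 *\<^sub>R sqC B h - B h"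
proof -
  let ?Y = "\<lambda>N. sqY B N (sqY B N h)"
  let ?C = "sqC B"
  have t1: "(\<lambda>N. sqY B N h - ?C h) \<longlonglongrightarrow> 0" by (rule LIM_zero) (rule sqY_tendsto[OF Bl Bn])
  have t2: "(\<lambda>N. sqY B N (?C h) - ?C (?C h)) \<longlonglongrightarrow> 0" by (rule LIM_zero) (rule sqY_tendsto[OF Bl Bn])
  have "(\<lambda>N. ?Y N - ?C (?C h)) \<longlonglongrightarrow> 0"
  proof (rule Lim_null_comparison)
    show "((\<lambda>N. norm (sqY B N h - ?C h) + norm (sqY B N (?C h) - ?C (?C h))) \<longlonglongrightarrow> 0)"
      using tendsto_add_zero[OF tendsto_norm_zero[OF t1] tendsto_norm_zero[OF t2]] .
    show "\<forall>\<^sub>F N in sequentially. norm (?Y N - ?C (?C h)) \<le> norm (sqY B N h - ?C h) + norm (sqY B N (?C h) - ?C (?C h))"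
    proof (intro always_eventually allI)
      fix N
      have e: "?Y N - ?C (?C h) = sqY B N (sqY B N h - ?C h) + (sqY B N (?C h) - ?C (?C h))"
        by (simp add: clin_diff[OF sqY_clin[OF Bl Bn]])
      have "norm (?Y N - ?C (?C h)) \<le> norm (sqY B N (sqY B N h - ?C h)) + norm (sqY B N (?C h) - ?C (?C h))"
        unfolding e by (rule norm_triangle_ineq)
      also have "norm (sqY B N (sqY B N h - ?C h)) \<le> norm (sqY B N h - ?C h)" by (rule sqY_norm[OF Bl Bn])
      finally show "norm (?Y N - ?C (?C h)) \<le> norm (sqY B N h - ?C h) + norm (sqY B N (?C h) - ?C (?C h))"
        by simp
    qed
  qed
  then have L1: "?Y \<longlonglongrightarrow> ?C (?C h)" by (simp add: LIM_zero_iff)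
  have tc: "(\<lambda>N. (1 - (\<Sum>k<N. cc k))\<^sup>2 * norm h) \<longlonglongrightarrow> 0"
  proof -
    have "(\<lambda>N. 1 - (\<Sum>k<N. cc k)) \<longlonglongrightarrow> 1 - 1" by (intro tendsto_diff tendsto_const cc_partial_tendsto)
    then have "(\<lambda>N. (1 - (\<Sum>k<N. cc k))\<^sup>2 * norm h) \<longlonglongrightarrow> (1 - 1)\<^sup>2 * norm h"
      by (intro tendsto_mult tendsto_power tendsto_const)
    then show ?thesis by simp
  qed
  have "(\<lambda>N. ?Y N - (2 *\<^sub>R ?C h - B h)) \<longlonglongrightarrow> 0"
  proof (rule Lim_null_comparison)
    show "((\<lambda>N. 2 * norm (sqY B N h - ?C h) + (1 - (\<Sum>k<N. cc k))\<^sup>2 * norm h) \<longlonglongrightarrow> 0)"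
      using tendsto_add_zero[OF tendsto_mult_right_zero[OF tendsto_norm_zero[OF t1]] tc] .
    show "\<forall>\<^sub>F N in sequentially. norm (?Y N - (2 *\<^sub>R ?C h - B h)) \<le> 2 * norm (sqY B N h - ?C h) + (1 - (\<Sum>k<N. cc k))\<^sup>2 * norm h"
      unfolding eventually_sequentially
    proof (intro exI[of _ 2] allI impI)
      fix N :: nat assume N: "N \<ge> 2"
      have e: "?Y N - (2 *\<^sub>R ?C h - B h) = (?Y N - (2 *\<^sub>R sqY B N h - B h)) + 2 *\<^sub>R (sqY B N h - ?C h)"
        by (simp add: algebra_simps)
      have "norm (?Y N - (2 *\<^sub>R ?C h - B h)) \<le> norm (?Y N - (2 *\<^sub>R sqY B N h - B h)) + norm (2 *\<^sub>R (sqY B N h - ?C h))"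
        unfolding e by (rule norm_triangle_ineq)
      also have "norm (2 *\<^sub>R (sqY B N h - ?C h)) = 2 * norm (sqY B N h - ?C h)" by simp
      finally show "norm (?Y N - (2 *\<^sub>R ?C h - B h)) \<le> 2 * norm (sqY B N h - ?C h) + (1 - (\<Sum>k<N. cc k))\<^sup>2 * norm h"
        using sq_diff_bound[OF N, of h] by linarith
    qed
  qed
  then have L2: "?Y \<longlonglongrightarrow> 2 *\<^sub>R ?C h - B h" by (simp add: LIM_zero_iff)
  show ?thesis using L1 L2 by (rule LIMSEQ_unique)
qed

end

lemma cinner_scaleR_left: "cinner (r *\<^sub>R x) y = complex_of_real r * cinner x (y::'a::complex_hilbert)"
  by (simp only: scaleR_scaleC[of r x] cinner_scaleC_left complex_cnj_complex_of_real)
lemma cinner_scaleR_right: "cinner x (r *\<^sub>R y) = complex_of_real r * cinner x (y::'a::complex_hilbert)"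
  by (simp only: scaleR_scaleC[of r y] cinner_scaleC_right)

lemma norm_diff_sq: "(norm (x - y))\<^sup>2 = (norm x)\<^sup>2 - 2 * Re (cinner x y) + (norm (y::'a::complex_hilbert))\<^sup>2"
proof -
  have "complex_of_real ((norm (x - y))\<^sup>2) = cinner (x - y) (x - y)" by (rule norm_cinner)
  also have "\<dots> = cinner x x - cinner x y - cinner y x + cinner y y"
    by (simp add: cinner_diff_left cinner_diff_right)
  finally have "(norm (x - y))\<^sup>2 = Re (cinner x x - cinner x y - cinner y x + cinner y y)"
    by (metis Re_complex_of_real)
  also have "\<dots> = Re (cinner x x) - Re (cinner x y) - Re (cinner y x) + Re (cinner y y)" by simp
  also have "Re (cinner y x) = Re (cinner x y)" by (subst cinner_commute) simp
  finally show ?thesis by (simp add: Re_cinner_self)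
qed

lemma sadj_quad_real: "sadj S \<Longrightarrow> Re (cinner h (S (S h))) = (norm (S h))\<^sup>2"
  by (metis sadjD Re_cinner_self)

lemma abs_exists:
  fixes S :: "'a::complex_hilbert \<Rightarrow> 'a"
  assumes Sl: "clin S" and Ss: "sadj S"
  shows "\<exists>R. clin R \<and> sadj R \<and> (\<forall>h. R (R h) = S (S h)) \<and> (\<forall>h. Re (cinner h (R h)) \<ge> 0) \<and>
    (\<forall>Z. clin Z \<longrightarrow> (\<forall>h. Z (S h) = S (Z h)) \<longrightarrow> (\<forall>h. Z (R h) = R (Z h)))"
proof -
  obtain K where K: "\<And>h. norm (S h) \<le> norm h * K" using clinD_bound[OF Sl] by blast
  define lam :: real where "lam = K\<^sup>2 + 1"
  have lam0: "lam > 0" unfolding lam_def using zero_le_power2[of K] by linarith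
  have Sb: "(norm (S h))\<^sup>2 \<le> lam * (norm h)\<^sup>2" for h
  proof -
    have "norm (S h) \<le> norm h * \<bar>K\<bar>" using K[of h] by (rule order_trans) (simp add: mult_left_mono)
    then have "(norm (S h))\<^sup>2 \<le> (norm h * \<bar>K\<bar>)\<^sup>2" by (rule power_mono) simp
    also have "\<dots> = K\<^sup>2 * (norm h)\<^sup>2" by (simp add: power_mult_distrib)
    also have "\<dots> \<le> lam * (norm h)\<^sup>2" unfolding lam_def by (simp add: mult_right_mono)
    finally show ?thesis .
  qed
  define c :: real where "c = 1 / lam"
  have c0: "c > 0" using lam0 by (simp add: c_def)
  define B where "B = (\<lambda>h. h - c *\<^sub>R S (S h))"
  have Bl: "clin B" unfolding B_def
    by (rule clin_minus2[OF clin_id clin_smultR[OF clin_comp[OF Sl Sl]]])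
  have Bs: "sadj B"
    unfolding sadj_def B_def
    by (simp add: cinner_diff_left cinner_diff_right cinner_scaleR_left cinner_scaleR_right sadjD[OF Ss])
  have Bn: "norm (B h) \<le> norm h" for h
  proof -
    have "(norm (B h))\<^sup>2 = (norm h)\<^sup>2 - 2 * Re (cinner h (c *\<^sub>R S (S h))) + (norm (c *\<^sub>R S (S h)))\<^sup>2"
      unfolding B_def by (rule norm_diff_sq)
    also have "Re (cinner h (c *\<^sub>R S (S h))) = c * (norm (S h))\<^sup>2"
      by (simp only: cinner_scaleR_right Re_ofreal_mult sadj_quad_real[OF Ss])
    also have "(norm (c *\<^sub>R S (S h)))\<^sup>2 = c\<^sup>2 * (norm (S (S h)))\<^sup>2"
      using c0 by (simp add: power_mult_distrib)
    also have "c\<^sup>2 * (norm (S (S h)))\<^sup>2 \<le> c\<^sup>2 * (lam * (norm (S h))\<^sup>2)"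
      by (rule mult_left_mono) (simp_all add: Sb)
    also have "c\<^sup>2 * (lam * (norm (S h))\<^sup>2) = c * (norm (S h))\<^sup>2"
      using lam0 by (simp add: c_def power2_eq_square)
    finally have "(norm (B h))\<^sup>2 \<le> (norm h)\<^sup>2 - c * (norm (S h))\<^sup>2" by simp
    also have "\<dots> \<le> (norm h)\<^sup>2" using c0 by simp
    finally show ?thesis using power2_le_imp_le by fastforce
  qed
  let ?C = "sqC B"
  have Cl: "clin ?C" by (rule sqC_clin[OF Bl Bn])
  have Cs: "sadj ?C" by (rule sqC_sadj[OF Bl Bn Bs])
  have Csq: "?C (?C h) = 2 *\<^sub>R ?C h - B h" for h by (rule sqC_sq[OF Bl Bn])
  define R where "R = (\<lambda>h. sqrt lam *\<^sub>R (h - ?C h))"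
  have Rl: "clin R" unfolding R_def by (intro clin_smultR clin_minus2 clin_id Cl)
  have Rs: "sadj R" unfolding R_def sadj_def
    by (simp add: cinner_diff_left cinner_diff_right cinner_scaleR_left cinner_scaleR_right sadjD[OF Cs])
  have RR: "R (R h) = S (S h)" for h
  proof -
    have "R (R h) = sqrt lam *\<^sub>R (sqrt lam *\<^sub>R (h - ?C h) - ?C (sqrt lam *\<^sub>R (h - ?C h)))"
      by (simp add: R_def)
    also have "\<dots> = (sqrt lam * sqrt lam) *\<^sub>R (h - ?C h - (?C h - ?C (?C h)))"
      by (simp add: clin_scaleR[OF Cl] clin_diff[OF Cl] scaleR_diff_right)
    also have "\<dots> = lam *\<^sub>R (h - B h)"
    proof -
      have "h - ?C h - (?C h - ?C (?C h)) = h - B h" by (simp add: Csq scaleR_2 algebra_simps)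
      moreover have "sqrt lam * sqrt lam = lam" using lam0 by simp
      ultimately show ?thesis by simp
    qed
    also have "\<dots> = S (S h)"
      using lam0 by (simp add: B_def c_def)
    finally show ?thesis .
  qed
  have Rp: "Re (cinner h (R h)) \<ge> 0" for h
  proof -
    have "Re (cinner h (R h)) = sqrt lam * ((norm h)\<^sup>2 - Re (cinner h (?C h)))"
      by (simp add: R_def cinner_scaleR_right cinner_diff_right Re_cinner_self)
    also have "\<dots> \<ge> 0" using sqC_re[OF Bl Bn, of h] lam0 by simp
    finally show ?thesis by simp
  qed
  have Rc: "Z (R h) = R (Z h)" if Z: "clin Z" and ZS: "\<And>h. Z (S h) = S (Z h)" for Z h
  proof -
    have ZB: "Z (B h) = B (Z h)" for h
      by (simp add: B_def clin_diff[OF Z] clin_scaleR[OF Z] ZS)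
    show ?thesis
      by (simp add: R_def clin_scaleR[OF Z] clin_diff[OF Z] sqC_comm[OF Bl Bn Z ZB])
  qed
  have RR': "\<forall>h. R (R h) = S (S h)" using RR by simp
  have Rp': "\<forall>h. Re (cinner h (R h)) \<ge> 0" using Rp by simp
  have Rc': "\<forall>Z. clin Z \<longrightarrow> (\<forall>h. Z (S h) = S (Z h)) \<longrightarrow> (\<forall>h. Z (R h) = R (Z h))"
  proof (intro allI impI)
    fix Z h assume "clin Z" "\<forall>h. Z (S h) = S (Z h)"
    then show "Z (R h) = R (Z h)" by (intro Rc) auto
  qed
  show ?thesis by (intro exI[of _ R] conjI Rl Rs RR' Rp' Rc')
qed

lemma posneg_split:
  fixes S :: "'a::complex_hilbert \<Rightarrow> 'a"
  assumes Sl: "clin S" and Ss: "sadj S"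
    and xp: "Re (cinner x (S x)) > 0" and yn: "Re (cinner y (S y)) < 0"
  shows "\<exists>F G. clin F \<and> clin G \<and> (\<forall>h. F (G h) = 0) \<and> (\<exists>h. F h \<noteq> 0) \<and> (\<exists>h. G h \<noteq> 0) \<and>
    (\<forall>h. S h = 0 \<longrightarrow> F h = 0 \<and> G h = 0) \<and>
    (\<forall>Z. clin Z \<longrightarrow> (\<forall>h. Z (S h) = S (Z h)) \<longrightarrow> (\<forall>h. Z (F h) = F (Z h) \<and> Z (G h) = G (Z h)))"
proof -
  obtain R where Rl: "clin R" and Rs: "sadj R" and RR: "\<And>h. R (R h) = S (S h)"
    and Rp: "\<And>h. Re (cinner h (R h)) \<ge> 0"
    and Rc: "\<And>Z h. clin Z \<Longrightarrow> (\<And>h. Z (S h) = S (Z h)) \<Longrightarrow> Z (R h) = R (Z h)"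
    using abs_exists[OF Sl Ss] by blast
  have RS: "R (S h) = S (R h)" for h using Rc[OF Sl, of h] by simp
  define F where "F = (\<lambda>h. (1/2::real) *\<^sub>R (R h + S h))"
  define G where "G = (\<lambda>h. (1/2::real) *\<^sub>R (R h - S h))"
  have Fl: "clin F" unfolding F_def by (intro clin_smultR clin_plus Rl Sl)
  have Gl: "clin G" unfolding G_def by (intro clin_smultR clin_minus2 Rl Sl)
  have FG: "F (G h) = 0" for h
  proof -
    have 1: "R (G h) = (1/2::real) *\<^sub>R (S (S h) - S (R h))"
      by (simp only: G_def clin_scaleR[OF Rl] clin_diff[OF Rl] RR RS)
    have 2: "S (G h) = (1/2::real) *\<^sub>R (S (R h) - S (S h))"
      by (simp only: G_def clin_scaleR[OF Sl] clin_diff[OF Sl])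
    have "F (G h) = (1/2::real) *\<^sub>R ((1/2::real) *\<^sub>R (S (S h) - S (R h)) + (1/2::real) *\<^sub>R (S (R h) - S (S h)))"
      by (simp only: F_def 1 2)
    also have "\<dots> = 0" by (simp add: algebra_simps)
    finally show ?thesis .
  qed
  have Fnz: "\<exists>h. F h \<noteq> 0"
  proof (rule ccontr)
    assume "\<not> ?thesis"
    then have "F x = 0" by simp
    then have "R x = - S x" by (simp add: F_def eq_neg_iff_add_eq_0)
    then have "Re (cinner x (S x)) = - Re (cinner x (R x))" by (simp add: cinner_minus_right)
    with Rp[of x] xp show False by simp
  qed
  have Gnz: "\<exists>h. G h \<noteq> 0"
  proof (rule ccontr)
    assume "\<not> ?thesis"
    then have "G y = 0" by simp
    then have "R y = S y" by (simp add: G_def)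
    then have "Re (cinner y (S y)) = Re (cinner y (R y))" by simp
    with Rp[of y] yn show False by simp
  qed
  have ker: "S h = 0 \<Longrightarrow> R h = 0" for h
  proof -
    assume "S h = 0"
    then have "(norm (R h))\<^sup>2 = 0"
      using sadj_quad_real[OF Rs, of h] RR[of h] clin_zero[OF Sl] by simp
    then show "R h = 0" by simp
  qed
  have comm0: "Z (F h) = F (Z h) \<and> Z (G h) = G (Z h)" if Z: "clin Z" and ZS: "\<And>h. Z (S h) = S (Z h)" for Z h
    unfolding F_def G_def
    by (simp add: clin_scaleR[OF Z] clinD_add[OF Z] clin_diff[OF Z] ZS Rc[OF Z ZS])
  have comm: "\<forall>Z. clin Z \<longrightarrow> (\<forall>h. Z (S h) = S (Z h)) \<longrightarrow> (\<forall>h. Z (F h) = F (Z h) \<and> Z (G h) = G (Z h))"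
  proof (intro allI impI)
    fix Z h assume "clin Z" "\<forall>h. Z (S h) = S (Z h)"
    then show "Z (F h) = F (Z h) \<and> Z (G h) = G (Z h)" by (intro comm0) auto
  qed
  have FG': "\<forall>h. F (G h) = 0" using FG by simp
  have ker2: "\<forall>h. S h = 0 \<longrightarrow> F h = 0 \<and> G h = 0"
    using ker by (simp add: F_def G_def)
  show ?thesis
    by (intro exI[of _ F] exI[of _ G] conjI Fl Gl FG' Fnz Gnz ker2 comm)
qed

inductive_set LS :: "('a::complex_hilbert \<Rightarrow> 'a) set \<Rightarrow> ('a \<Rightarrow> 'a) set" for A where
  LS_zero: "(\<lambda>_. 0) \<in> LS A"
| LS_base: "a \<in> A \<Longrightarrow> a \<in> LS A"
| LS_add: "f \<in> LS A \<Longrightarrow> g \<in> LS A \<Longrightarrow> (\<lambda>h. f h + g h) \<in> LS A"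
| LS_scale: "f \<in> LS A \<Longrightarrow> (\<lambda>h. scaleC c (f h)) \<in> LS A"

lemma LS_right:
  assumes "f \<in> LS A" and "\<And>a. a \<in> A \<Longrightarrow> a \<circ> q \<in> LS A'"
  shows "f \<circ> q \<in> LS A'"
  using assms(1)
proof induction
  case LS_zero
  have e: "(\<lambda>_. 0) \<circ> q = (\<lambda>_. 0)" by (simp add: comp_def)
  show ?case unfolding e by (rule LS.LS_zero)
next
  case (LS_base a) then show ?case by (rule assms(2))
next
  case (LS_add f g)
  have "(\<lambda>h. f h + g h) \<circ> q = (\<lambda>h. (f \<circ> q) h + (g \<circ> q) h)" by (simp add: comp_def)
  then show ?case using LS.LS_add[OF LS_add.IH] by simp
next
  case (LS_scale f c)
  have "(\<lambda>h. scaleC c (f h)) \<circ> q = (\<lambda>h. scaleC c ((f \<circ> q) h))" by (simp add: comp_def)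
  then show ?case using LS.LS_scale[OF LS_scale.IH] by simp
qed

lemma LS_left:
  assumes "f \<in> LS A" and L: "clin L" and "\<And>a. a \<in> A \<Longrightarrow> L \<circ> a \<in> LS A'"
  shows "L \<circ> f \<in> LS A'"
  using assms(1)
proof induction
  case LS_zero
  have e: "L \<circ> (\<lambda>_. 0) = (\<lambda>_. 0)" by (simp add: comp_def clin_zero[OF L])
  show ?case unfolding e by (rule LS.LS_zero)
next
  case (LS_base a) then show ?case by (rule assms(3))
next
  case (LS_add f g)
  have "L \<circ> (\<lambda>h. f h + g h) = (\<lambda>h. (L \<circ> f) h + (L \<circ> g) h)" by (simp add: comp_def clinD_add[OF L])
  then show ?case using LS.LS_add[OF LS_add.IH] by simp
next
  case (LS_scale f c)
  have "L \<circ> (\<lambda>h. scaleC c (f h)) = (\<lambda>h. scaleC c ((L \<circ> f) h))" by (simp add: comp_def clinD_scale[OF L])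
  then show ?case using LS.LS_scale[OF LS_scale.IH] by simp
qed

lemma LS_clin: "f \<in> LS A \<Longrightarrow> (\<And>a. a \<in> A \<Longrightarrow> clin a) \<Longrightarrow> clin f"
  by (induction rule: LS.induct) (auto intro: clin_const0 clin_plus clin_smult)

lemma clin_o: "clin f \<Longrightarrow> clin g \<Longrightarrow> clin (f \<circ> g)"
  unfolding comp_def by (rule clin_comp)

locale cube =
  fixes X :: "'v set" and p :: "'v \<Rightarrow> 'h::complex_hilbert \<Rightarrow> 'h" and adj :: "'v \<Rightarrow> 'v \<Rightarrow> bool"
    and d :: "'v \<Rightarrow> nat" and u :: 'v
  assumes u_X: "u \<in> X"
    and p_clin: "x \<in> X \<Longrightarrow> clin (p x)"
    and p_idem: "x \<in> X \<Longrightarrow> p x (p x h) = p x h"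
    and p_zero: "x \<in> X \<Longrightarrow> y \<in> X \<Longrightarrow> x \<noteq> y \<Longrightarrow> \<not> adj x y \<Longrightarrow> p x (p y h) = 0"
    and adj_X: "adj x y \<Longrightarrow> x \<in> X \<and> y \<in> X"
    and adj_sym: "adj x y \<Longrightarrow> adj y x"
    and adj_d: "adj x y \<Longrightarrow> d y = d x + 1 \<or> d x = d y + 1"
    and d_u: "d u = 0"
    and square: "adj a b \<Longrightarrow> adj b c \<Longrightarrow> a \<noteq> c \<Longrightarrow> adj a b' \<Longrightarrow> adj b' c \<Longrightarrow> b' \<noteq> b \<Longrightarrow>
       p a (p b (p c h)) = - p a (p b' (p c h)) \<and> int (d b') = int (d a) + int (d c) - int (d b)"
    and square_ex: "adj a b \<Longrightarrow> adj b c \<Longrightarrow> a \<noteq> c \<Longrightarrow> \<exists>b'. adj a b' \<and> adj b' c \<and> b' \<noteq> b"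
begin

lemma adj_neq: "adj x y \<Longrightarrow> x \<noteq> y"
  using adj_d by fastforce

definition T :: "'v \<Rightarrow> 'h \<Rightarrow> 'h" where "T v = p u \<circ> p v \<circ> p u"

inductive Cp :: "('h \<Rightarrow> 'h) \<Rightarrow> bool" where
  Cp_base: "Cp (p u)"
| Cp_step: "Cp c \<Longrightarrow> adj u v \<Longrightarrow> Cp (c \<circ> T v)"

inductive Geo :: "'v \<Rightarrow> ('h \<Rightarrow> 'h) \<Rightarrow> bool" where
  Geo_base: "Geo u (p u)"
| Geo_step: "Geo x g \<Longrightarrow> adj x y \<Longrightarrow> d y = d x + 1 \<Longrightarrow> Geo y (g \<circ> p y)"

definition gen :: "'v \<Rightarrow> ('h \<Rightarrow> 'h) set" where
  "gen x = {c \<circ> g | c g. Cp c \<and> Geo x g}"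

abbreviation R :: "'v \<Rightarrow> ('h \<Rightarrow> 'h) set" where
  "R x \<equiv> LS (gen x)"

lemma pu_clin: "clin (p u)" by (rule p_clin[OF u_X])
lemma pu_idem: "p u \<circ> p u = p u" by (rule ext) (simp add: p_idem[OF u_X])

lemma T_clin: "adj u v \<Longrightarrow> clin (T v)"
  unfolding T_def by (intro clin_o pu_clin p_clin) (use adj_X in blast)

lemma T_left: "p u \<circ> T v = T v" unfolding T_def by (rule ext) (simp add: p_idem[OF u_X])
lemma T_right: "T v \<circ> p u = T v" unfolding T_def by (rule ext) (simp add: p_idem[OF u_X])

lemma Cp_props: "Cp c \<Longrightarrow> clin c \<and> p u \<circ> c = c \<and> c \<circ> p u = c"
proof (induction rule: Cp.induct)
  case Cp_base then show ?case by (simp add: pu_clin pu_idem)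
next
  case (Cp_step c v)
  have cl: "clin c" and l: "p u \<circ> c = c" using Cp_step.IH by blast+
  have "clin (c \<circ> T v)" using cl T_clin[OF Cp_step.hyps(2)] by (rule clin_o)
  moreover have "p u \<circ> (c \<circ> T v) = c \<circ> T v" by (simp only: o_assoc l)
  moreover have "(c \<circ> T v) \<circ> p u = c \<circ> T v" by (simp only: o_assoc[symmetric] T_right)
  ultimately show ?case by blast
qed

lemma Cp_mult: "Cp c \<Longrightarrow> Cp c' \<Longrightarrow> Cp (c' \<circ> c)"
proof (induction rule: Cp.induct)
  case Cp_base
  have e: "c' \<circ> p u = c'" using Cp_props[OF Cp_base] by blast
  show ?case unfolding e by (rule Cp_base)
next
  case (Cp_step c v)
  have "Cp ((c' \<circ> c) \<circ> T v)" by (rule Cp.Cp_step[OF Cp_step.IH[OF Cp_step.prems] Cp_step.hyps(2)])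
  then show ?case by (simp only: o_assoc)
qed

lemma Geo_props: "Geo x g \<Longrightarrow> x \<in> X \<and> clin g \<and> g \<circ> p x = g"
proof (induction rule: Geo.induct)
  case Geo_base then show ?case by (simp add: u_X pu_clin pu_idem)
next
  case (Geo_step x g y)
  have yX: "y \<in> X" using Geo_step adj_X by blast
  have "clin (g \<circ> p y)" using Geo_step yX by (intro clin_o p_clin) auto
  moreover have "(g \<circ> p y) \<circ> p y = g \<circ> p y" by (rule ext) (simp add: p_idem[OF yX])
  ultimately show ?case using yX by blast
qed

lemma Geo_u: "Geo u g \<Longrightarrow> g = p u"
  by (cases rule: Geo.cases) (auto simp: d_u)

lemma gen_clin: "a \<in> gen x \<Longrightarrow> clin a"
  unfolding gen_def using Cp_props Geo_props clin_o by blast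

lemma R_clin: "Z \<in> R x \<Longrightarrow> clin Z"
  using LS_clin gen_clin by blast

lemma R_fwd: "Z \<in> R x \<Longrightarrow> adj x y \<Longrightarrow> d y = d x + 1 \<Longrightarrow> Z \<circ> p y \<in> R y"
proof (erule LS_right)
  fix a assume "a \<in> gen x" "adj x y" "d y = d x + 1"
  then obtain c g where a: "a = c \<circ> g" "Cp c" "Geo x g" unfolding gen_def by blast
  have "Geo y (g \<circ> p y)" using a \<open>adj x y\<close> \<open>d y = d x + 1\<close> by (intro Geo_step)
  then have "c \<circ> (g \<circ> p y) \<in> gen y" using a unfolding gen_def by blast
  then show "a \<circ> p y \<in> R y" using a by (simp add: o_assoc LS_base)
qed

lemma R_stay: "Z \<in> R x \<Longrightarrow> Z \<circ> p x \<in> R x"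
proof (erule LS_right)
  fix a assume "a \<in> gen x"
  then obtain c g where a: "a = c \<circ> g" "Cp c" "Geo x g" unfolding gen_def by blast
  have "a \<circ> p x = a" using a Geo_props[OF a(3)] by (simp add: o_assoc[symmetric])
  then show "a \<circ> p x \<in> R x" using \<open>a \<in> gen x\<close> by (simp add: LS_base)
qed

lemma R_zero: "Z \<in> R x \<Longrightarrow> y \<in> X \<Longrightarrow> x \<noteq> y \<Longrightarrow> \<not> adj x y \<Longrightarrow> Z \<circ> p y \<in> R y"
proof (erule LS_right)
  fix a assume "a \<in> gen x" "y \<in> X" "x \<noteq> y" "\<not> adj x y"
  then obtain c g where a: "a = c \<circ> g" "Cp c" "Geo x g" unfolding gen_def by blast
  have xX: "x \<in> X" and g: "clin g" "g \<circ> p x = g" using Geo_props[OF a(3)] by auto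
  have ca: "clin a" using \<open>a \<in> gen x\<close> gen_clin by blast
  have "a \<circ> p y = (\<lambda>_. 0)"
  proof (rule ext)
    fix h
    have "(a \<circ> p y) h = c (g (p y h))" using a by simp
    also have "\<dots> = c ((g \<circ> p x) (p y h))" using g by simp
    also have "\<dots> = c (g 0)" using p_zero[OF xX \<open>y \<in> X\<close> \<open>x \<noteq> y\<close> \<open>\<not> adj x y\<close>] by simp
    also have "\<dots> = 0" using Cp_props[OF a(2)] g by (simp add: clin_zero)
    finally show "(a \<circ> p y) h = 0" .
  qed
  then show "a \<circ> p y \<in> R y" by (simp add: LS_zero)
qed

lemma R_left: "Cp c' \<Longrightarrow> Z \<in> R x \<Longrightarrow> c' \<circ> Z \<in> R x"
proof -
  assume c': "Cp c'" and Z: "Z \<in> R x"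
  show ?thesis
  proof (rule LS_left[OF Z])
    show "clin c'" using Cp_props[OF c'] by simp
    fix a assume "a \<in> gen x"
    then obtain c g where a: "a = c \<circ> g" "Cp c" "Geo x g" unfolding gen_def by blast
    have "c' \<circ> a = (c' \<circ> c) \<circ> g" using a by (simp add: o_assoc)
    moreover have "Cp (c' \<circ> c)" using Cp_mult a(2) c' by blast
    ultimately have "c' \<circ> a \<in> gen x" using a unfolding gen_def by blast
    then show "c' \<circ> a \<in> R x" by (rule LS_base)
  qed
qed

lemma R_neg: "Z \<in> R x \<Longrightarrow> (\<lambda>h. - Z h) \<in> R x"
  using LS_scale[of Z "gen x" "-1"] by (simp add: scaleC_minus_left scaleC_one)

end

fun pwl :: "('v \<Rightarrow> 'h \<Rightarrow> 'h) \<Rightarrow> 'v list \<Rightarrow> 'h \<Rightarrow> 'h" where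
  "pwl p [] = id"
| "pwl p (x # xs) = p x \<circ> pwl p xs"

lemma pwl_append: "pwl p (xs @ [y]) = pwl p xs \<circ> p y"
  by (induction xs) (auto simp: o_assoc)

context cube begin

lemma geo_back: "Geo y g \<Longrightarrow> adj y x \<Longrightarrow> d x = d y + 1 \<Longrightarrow> g \<circ> p x \<circ> p y \<in> R y"
proof (induction arbitrary: x rule: Geo.induct)
  case (Geo_base x)
  have c: "Cp (p u \<circ> T x)" by (rule Cp_step[OF Cp_base Geo_base(1)])
  have "(p u \<circ> T x) \<circ> p u \<in> gen u" unfolding gen_def using c Geo.Geo_base by blast
  moreover have "(p u \<circ> T x) \<circ> p u = p u \<circ> p x \<circ> p u" by (simp only: T_left T_right) (simp only: T_def)
  ultimately show ?case by (simp only:) (rule LS_base)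
next
  case (Geo_step t g' y x)
  have ty: "adj t y" and dy: "d y = d t + 1" and yx: "adj y x" and dx: "d x = d y + 1"
    using Geo_step by auto
  have tx: "t \<noteq> x" using dy dx by auto
  obtain y' where ty': "adj t y'" and y'x: "adj y' x" and y'y: "y' \<noteq> y"
    using square_ex[OF ty yx tx] by blast
  have s1: "p t (p y (p x h)) = - p t (p y' (p x h))" and dy': "int (d y') = int (d t) + int (d x) - int (d y)" for h
    using square[OF ty yx tx ty' y'x y'y] by auto
  have dy'': "d y' = d t + 1" using dy' dx dy by simp
  have s2: "p y' (p x (p y h)) = - p y' (p t (p y h))" for h
    using square[OF y'x adj_sym[OF yx] y'y adj_sym[OF ty'] ty tx] by auto
  have tX: "t \<in> X" using adj_X[OF ty] by simp
  have g': "clin g'" "g' \<circ> p t = g'" using Geo_props[OF Geo_step.hyps(1)] by auto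
  have g'h: "g' (p t v) = g' v" for v using fun_cong[OF g'(2), of v] by simp
  have eq: "g' \<circ> p y \<circ> p x \<circ> p y = g' \<circ> p y' \<circ> p t \<circ> p y"
  proof (rule ext)
    fix h
    have "(g' \<circ> p y \<circ> p x \<circ> p y) h = g' (p t (p y (p x (p y h))))" by (simp add: g'h)
    also have "\<dots> = g' (p t (p y' (p t (p y h))))"
      by (simp add: s1 s2 clin_minus[OF p_clin[OF tX]] clin_minus[OF p_clin[OF adj_X[OF y'x, THEN conjunct1]]])
    also have "\<dots> = (g' \<circ> p y' \<circ> p t \<circ> p y) h" by (simp add: g'h)
    finally show "(g' \<circ> p y \<circ> p x \<circ> p y) h = (g' \<circ> p y' \<circ> p t \<circ> p y) h" .
  qed
  have "g' \<circ> p y' \<circ> p t \<in> R t" by (rule Geo_step.IH[OF ty' dy''])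
  then have "g' \<circ> p y' \<circ> p t \<circ> p y \<in> R y" by (rule R_fwd[OF _ ty dy])
  then show ?case by (simp only: eq)
qed

lemma geo_back2: "Geo x g \<Longrightarrow> adj x y \<Longrightarrow> d x = d y + 1 \<Longrightarrow> g \<circ> p y \<in> R y"
proof (induction arbitrary: y rule: Geo.induct)
  case (Geo_base y) then show ?case by (simp add: d_u)
next
  case (Geo_step w g' x y)
  have wx: "adj w x" and dx: "d x = d w + 1" and xy: "adj x y" and dxy: "d x = d y + 1"
    using Geo_step by auto
  show ?case
  proof (cases "y = w")
    case True
    show ?thesis unfolding True by (rule geo_back[OF Geo_step.hyps(1) wx dx])
  next
    case False
    then have wy: "w \<noteq> y" by simp
    obtain z where wz: "adj w z" and zy: "adj z y" and zx: "z \<noteq> x"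
      using square_ex[OF wx xy wy] by blast
    have s: "p w (p x (p y h)) = - p w (p z (p y h))" and dz: "int (d z) = int (d w) + int (d y) - int (d x)" for h
      using square[OF wx xy wy wz zy zx] by auto
    have dwz: "d w = d z + 1" and dyz: "d y = d z + 1" using dz dx dxy by auto
    have wX: "w \<in> X" using adj_X[OF wx] by simp
    have g': "clin g'" "g' \<circ> p w = g'" using Geo_props[OF Geo_step.hyps(1)] by auto
    have g'h: "g' (p w v) = g' v" for v using fun_cong[OF g'(2), of v] by simp
    have "g' \<circ> p z \<in> R z" by (rule Geo_step.IH[OF wz dwz])
    then have "g' \<circ> p z \<circ> p y \<in> R y" by (rule R_fwd[OF _ zy dyz])
    then have m: "(\<lambda>h. - (g' \<circ> p z \<circ> p y) h) \<in> R y" by (rule R_neg)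
    have eq: "g' \<circ> p x \<circ> p y = (\<lambda>h. - (g' \<circ> p z \<circ> p y) h)"
    proof (rule ext)
      fix h
      have "(g' \<circ> p x \<circ> p y) h = g' (p w (p x (p y h)))" by (simp add: g'h)
      also have "\<dots> = - g' (p w (p z (p y h)))" by (simp add: s clin_minus[OF g'(1)])
      also have "\<dots> = - (g' \<circ> p z \<circ> p y) h" by (simp add: g'h)
      finally show "(g' \<circ> p x \<circ> p y) h = - (g' \<circ> p z \<circ> p y) h" .
    qed
    show ?thesis unfolding eq by (rule m)
  qed
qed

lemma R_back: "Z \<in> R x \<Longrightarrow> adj x y \<Longrightarrow> d x = d y + 1 \<Longrightarrow> Z \<circ> p y \<in> R y"
proof (erule LS_right)
  fix a assume "a \<in> gen x" "adj x y" "d x = d y + 1"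
  then obtain c g where a: "a = c \<circ> g" "Cp c" "Geo x g" unfolding gen_def by blast
  have "g \<circ> p y \<in> R y" by (rule geo_back2[OF a(3) \<open>adj x y\<close> \<open>d x = d y + 1\<close>])
  then have "c \<circ> (g \<circ> p y) \<in> R y" by (rule R_left[OF a(2)])
  then show "a \<circ> p y \<in> R y" by (simp only: a o_assoc)
qed

lemma R_step: "Z \<in> R x \<Longrightarrow> y \<in> X \<Longrightarrow> Z \<circ> p y \<in> R y"
proof -
  assume Z: "Z \<in> R x" and y: "y \<in> X"
  consider "y = x" | "adj x y" | "x \<noteq> y \<and> \<not> adj x y" by blast
  then show ?thesis
  proof cases
    case 1 then show ?thesis using R_stay[OF Z] by simp
  next
    case 2
    then consider "d y = d x + 1" | "d x = d y + 1" using adj_d by blast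
    then show ?thesis
    proof cases
      case 1 then show ?thesis by (rule R_fwd[OF Z 2])
    next
      case 2 then show ?thesis by (rule R_back[OF Z \<open>adj x y\<close>])
    qed
  next
    case 3 then show ?thesis using R_zero[OF Z y] by blast
  qed
qed

lemma pu_gen: "p u \<in> R u"
proof -
  have "p u \<circ> p u \<in> gen u" unfolding gen_def using Cp_base Geo_base by blast
  then show ?thesis by (simp only: pu_idem) (rule LS_base)
qed

lemma word: "set ws \<subseteq> X \<Longrightarrow> \<exists>x. p u \<circ> pwl p ws \<in> R x"
proof (induction ws rule: rev_induct)
  case Nil
  have "p u \<circ> pwl p [] = p u" by simp
  then show ?case using pu_gen by metis
next
  case (snoc y ws)
  have "set ws \<subseteq> X" using snoc.prems by simp
  then obtain x where "p u \<circ> pwl p ws \<in> R x" using snoc.IH by blast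
  then have "p u \<circ> pwl p ws \<circ> p y \<in> R y" by (rule R_step) (use snoc in auto)
  then show ?case by (simp only: pwl_append o_assoc) blast
qed

lemma Ru_Cp: "Z \<in> R u \<Longrightarrow> Z \<in> LS (Collect Cp)"
proof -
  assume Z: "Z \<in> R u"
  have "Z \<circ> id \<in> LS (Collect Cp)"
  proof (rule LS_right[OF Z])
    fix a assume "a \<in> gen u"
    then obtain c g where a: "a = c \<circ> g" "Cp c" "Geo u g" unfolding gen_def by blast
    have "g = p u" by (rule Geo_u[OF a(3)])
    then have "a = c" using a Cp_props[OF a(2)] by simp
    then show "a \<circ> id \<in> LS (Collect Cp)" using a(2) by (simp add: LS_base)
  qed
  then show ?thesis by simp
qed

lemma corner: "set ws \<subseteq> X \<Longrightarrow> p u \<circ> pwl p ws \<circ> p u \<in> LS (Collect Cp)"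
proof -
  assume ws: "set ws \<subseteq> X"
  obtain x where "p u \<circ> pwl p ws \<in> R x" using word[OF ws] by blast
  then have "p u \<circ> pwl p ws \<circ> p u \<in> R u" by (rule R_step) (rule u_X)
  then show ?thesis by (rule Ru_Cp)
qed

lemma T_comm: "adj u v \<Longrightarrow> adj u w \<Longrightarrow> T v \<circ> T w = T w \<circ> T v"
proof (cases "v = w")
  case True then show ?thesis by simp
next
  case False
  assume uv: "adj u v" and uw: "adj u w"
  have vu: "adj v u" and wu: "adj w u" using uv uw adj_sym by auto
  obtain u' where vu': "adj v u'" and u'w: "adj u' w" and u'u: "u' \<noteq> u"
    using square_ex[OF vu uw False] by blast
  have u'v: "adj u' v" and wu': "adj w u'" using vu' u'w adj_sym by auto
  have s1: "p v (p u (p w h)) = - p v (p u' (p w h))" for h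
    using square[OF vu uw False vu' u'w u'u] by auto
  have s2: "p u (p v (p u' h)) = - p u (p w (p u' h))" for h
    using square[OF uv vu' u'u[symmetric] uw wu' False[symmetric]] by auto
  have s3: "p w (p u (p v h)) = - p w (p u' (p v h))" for h
    using square[OF wu uv False[symmetric] wu' u'v u'u] by auto
  have s4: "p u' (p v (p u h)) = - p u' (p w (p u h))" for h
    using square[OF u'v vu u'u u'w wu False[symmetric]] by auto
  have X: "u \<in> X" "v \<in> X" "w \<in> X" "u' \<in> X" using adj_X uv uw vu' by auto
  note lin = clin_minus[OF p_clin[OF X(1)]] clin_minus[OF p_clin[OF X(2)]] clin_minus[OF p_clin[OF X(3)]]
  show ?thesis
  proof (rule ext)
    fix h
    have "(T v \<circ> T w) h = p u (p v (p u (p w (p u h))))" by (simp add: T_def p_idem[OF X(1)])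
    also have "\<dots> = - p u (p v (p u' (p w (p u h))))" by (simp only: s1 lin)
    also have "\<dots> = p u (p w (p u' (p w (p u h))))" by (simp only: s2 minus_minus)
    finally have A: "(T v \<circ> T w) h = p u (p w (p u' (p w (p u h))))" .
    have "(T w \<circ> T v) h = p u (p w (p u (p v (p u h))))" by (simp add: T_def p_idem[OF X(1)])
    also have "\<dots> = - p u (p w (p u' (p v (p u h))))" by (simp only: s3 lin)
    also have "\<dots> = p u (p w (p u' (p w (p u h))))" by (simp only: s4 lin minus_minus)
    finally show "(T v \<circ> T w) h = (T w \<circ> T v) h" using A by simp
  qed
qed

lemma Cp_comm: "Cp c \<Longrightarrow> adj u v \<Longrightarrow> c \<circ> T v = T v \<circ> c"
proof (induction rule: Cp.induct)
  case Cp_base then show ?case by (simp only: T_left T_right)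
next
  case (Cp_step c w)
  have "c \<circ> T w \<circ> T v = c \<circ> (T w \<circ> T v)" by (simp only: o_assoc)
  also have "\<dots> = c \<circ> (T v \<circ> T w)" by (simp only: T_comm[OF Cp_step.hyps(2) Cp_step.prems])
  also have "\<dots> = T v \<circ> c \<circ> T w" by (simp only: o_assoc Cp_step.IH[OF Cp_step.prems])
  finally show ?case by (simp only: o_assoc)
qed

lemma LSCp_comm: "Z \<in> LS (Collect Cp) \<Longrightarrow> adj u v \<Longrightarrow> Z \<circ> T v = T v \<circ> Z"
proof (induction rule: LS.induct)
  case LS_zero show ?case by (rule ext) (simp add: clin_zero[OF T_clin[OF LS_zero]])
next
  case (LS_base a) then show ?case using Cp_comm by simp
next
  case (LS_add f g)
  show ?case
  proof (rule ext)
    fix h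
    have "f (T v h) = T v (f h)" "g (T v h) = T v (g h)"
      using fun_cong[OF LS_add.IH(1)[OF LS_add.prems], of h] fun_cong[OF LS_add.IH(2)[OF LS_add.prems], of h] by auto
    then show "((\<lambda>h. f h + g h) \<circ> T v) h = (T v \<circ> (\<lambda>h. f h + g h)) h"
      by (simp add: clinD_add[OF T_clin[OF LS_add.prems]])
  qed
next
  case (LS_scale f c)
  show ?case
  proof (rule ext)
    fix h
    have "f (T v h) = T v (f h)"
      using fun_cong[OF LS_scale.IH[OF LS_scale.prems], of h] by auto
    then show "((\<lambda>h. scaleC c (f h)) \<circ> T v) h = (T v \<circ> (\<lambda>h. scaleC c (f h))) h"
      by (simp add: clinD_scale[OF T_clin[OF LS_scale.prems]])
  qed
qed

lemma Cp_scalar: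
  assumes sc: "\<And>v. adj u v \<Longrightarrow> \<exists>l. T v = (\<lambda>h. scaleC l (p u h))"
  shows "Cp c \<Longrightarrow> \<exists>m. c = (\<lambda>h. scaleC m (p u h))"
proof (induction rule: Cp.induct)
  case Cp_base show ?case by (rule exI[of _ 1]) (simp add: scaleC_one)
next
  case (Cp_step c v)
  obtain m where m: "c = (\<lambda>h. scaleC m (p u h))" using Cp_step.IH by blast
  obtain l where l: "T v = (\<lambda>h. scaleC l (p u h))" using sc[OF Cp_step.hyps(2)] by blast
  have "c \<circ> T v = (\<lambda>h. scaleC (m * l) (p u h))"
    by (rule ext) (simp add: m l clinD_scale[OF pu_clin] p_idem[OF u_X] scaleC_scaleC)
  then show ?case by blast
qed

lemma LSCp_scalar:
  assumes sc: "\<And>v. adj u v \<Longrightarrow> \<exists>l. T v = (\<lambda>h. scaleC l (p u h))"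
  shows "Z \<in> LS (Collect Cp) \<Longrightarrow> \<exists>m. Z = (\<lambda>h. scaleC m (p u h))"
proof (induction rule: LS.induct)
  case LS_zero show ?case by (rule exI[of _ 0]) simp
next
  case (LS_base a) then show ?case using Cp_scalar[OF sc] by simp
next
  case (LS_add f g)
  then obtain m1 m2 where "f = (\<lambda>h. scaleC m1 (p u h))" "g = (\<lambda>h. scaleC m2 (p u h))" by blast
  then have "(\<lambda>h. f h + g h) = (\<lambda>h. scaleC (m1 + m2) (p u h))" by (simp add: scaleC_add_left)
  then show ?case by blast
next
  case (LS_scale f c)
  then obtain m where "f = (\<lambda>h. scaleC m (p u h))" by blast
  then have "(\<lambda>h. scaleC c (f h)) = (\<lambda>h. scaleC (c * m) (p u h))" by (simp add: scaleC_scaleC)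
  then show ?case by blast
qed

end

lemma quad_zero:
  assumes M: "clin M" and q: "\<And>w. cinner w (M w) = 0"
  shows "M z = 0"
proof -
  have E1: "cinner x (M y) + cinner y (M x) = 0" for x y
  proof -
    have "0 = cinner (x + y) (M (x + y))" using q by simp
    also have "\<dots> = cinner x (M x) + cinner x (M y) + cinner y (M x) + cinner y (M y)"
      by (simp add: clinD_add[OF M] cinner_add_left cinner_add_right)
    finally show ?thesis using q[of x] q[of y] by simp
  qed
  have E2: "cinner x (M y) - cinner y (M x) = 0" for x y
  proof -
    have "0 = cinner (scaleC \<i> x) (M y) + cinner y (M (scaleC \<i> x))" using E1 by simp
    also have "\<dots> = - \<i> * (cinner x (M y) - cinner y (M x))"
      by (simp add: clinD_scale[OF M] cinner_scaleC_left cinner_scaleC_right algebra_simps)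
    finally show ?thesis by simp
  qed
  have "cinner (M z) (M z) = 0" using E1[of "M z" z] E2[of "M z" z] by simp
  then show ?thesis by (simp add: cinner_self_eq_0)
qed

lemma choose_c:
  fixes P T :: "'a::complex_hilbert \<Rightarrow> 'a"
  assumes Pl: "clin P" and Ps: "sadj P" and PP: "\<And>h. P (P h) = P h"
    and Tl: "clin T" and Ts: "sadj T" and TP: "\<And>h. T (P h) = T h" and PT: "\<And>h. P (T h) = T h"
    and nsc: "\<not> (\<exists>l. T = (\<lambda>h. scaleC l (P h)))"
  shows "\<exists>c::real. \<exists>x y. Re (cinner x (T x - c *\<^sub>R P x)) > 0 \<and> Re (cinner y (T y - c *\<^sub>R P y)) < 0"
proof -
  have "\<exists>e. P e \<noteq> 0"
  proof (rule ccontr)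
    assume "\<not> ?thesis"
    then have "T = (\<lambda>h. scaleC 0 (P h))" using TP clin_zero[OF Tl] by (auto intro!: ext)
    with nsc show False by blast
  qed
  then obtain e where e: "P e \<noteq> 0" by blast
  define e1 where "e1 = P e"
  have e1P: "P e1 = e1" by (simp add: e1_def PP)
  have ne1: "(norm e1)\<^sup>2 > 0" using e by (simp add: e1_def)
  define c0 where "c0 = Re (cinner e1 (T e1)) / (norm e1)\<^sup>2"
  define M where "M = (\<lambda>h. T h - c0 *\<^sub>R P h)"
  have Ml: "clin M" unfolding M_def by (intro clin_minus2 Tl clin_smultR Pl)
  have Ms: "sadj M" unfolding M_def sadj_def
    by (simp add: cinner_diff_left cinner_diff_right cinner_scaleR_left cinner_scaleR_right sadjD[OF Ts] sadjD[OF Ps])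
  have "\<exists>z. M z \<noteq> 0"
  proof (rule ccontr)
    assume "\<not> ?thesis"
    then have "T = (\<lambda>h. scaleC (complex_of_real c0) (P h))"
      by (auto intro!: ext simp: M_def scaleR_scaleC)
    with nsc show False by blast
  qed
  then obtain z where "M z \<noteq> 0" by blast
  then obtain w where w: "cinner w (M w) \<noteq> 0" using quad_zero[OF Ml] by blast
  define w' where "w' = P w"
  have MP: "M (P h) = M h" for h by (simp add: M_def TP PP)
  have PM: "P (M h) = M h" for h by (simp add: M_def PT PP clin_diff[OF Pl] clin_scaleR[OF Pl])
  have "cinner w' (M w') = cinner w (M w)"
    by (simp add: w'_def MP sadjD[OF Ps] PM)
  then have ww: "cinner w' (M w') \<noteq> 0" using w by simp
  define a where "a = Re (cinner w' (M w'))"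
  have a0: "a \<noteq> 0" using ww cinner_real_selfadj[of M w'] Ms unfolding a_def sadj_def by (metis of_real_0)
  have w'0: "w' \<noteq> 0" using ww by auto
  have w'P: "P w' = w'" by (simp add: w'_def PP)
  have nw: "(norm w')\<^sup>2 > 0" using w'0 by simp
  have ReP: "Re (cinner x (P x)) = (norm x)\<^sup>2" if "P x = x" for x using that by (simp add: Re_cinner_self)
  have form: "Re (cinner x (T x - c *\<^sub>R P x)) = Re (cinner x (T x)) - c * (norm x)\<^sup>2" if "P x = x" for x c
    using that by (simp add: cinner_diff_right cinner_scaleR_right Re_ofreal_mult ReP Re_cinner_self)
  have aw: "Re (cinner w' (T w')) = a + c0 * (norm w')\<^sup>2"
    using form[OF w'P, of c0] by (simp add: a_def M_def)
  have ae: "Re (cinner e1 (T e1)) = c0 * (norm e1)\<^sup>2" using ne1 by (simp add: c0_def)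
  define c where "c = c0 + a / (2 * (norm w')\<^sup>2)"
  have fw0: "Re (cinner w' (T w' - c *\<^sub>R P w')) = a + c0 * (norm w')\<^sup>2 - c * (norm w')\<^sup>2"
    using form[OF w'P, of c] aw by simp
  have fw1: "a + c0 * (norm w')\<^sup>2 - c * (norm w')\<^sup>2 = a / 2"
    using nw unfolding c_def by (simp add: field_simps)
  have fw: "Re (cinner w' (T w' - c *\<^sub>R P w')) = a / 2" using fw0 fw1 by simp
  have fe: "Re (cinner e1 (T e1 - c *\<^sub>R P e1)) = - (a / (2 * (norm w')\<^sup>2)) * (norm e1)\<^sup>2"
    using form[OF e1P, of c] ae by (simp add: c_def algebra_simps)
  show ?thesis
  proof (cases "a > 0")
    case True
    have "Re (cinner e1 (T e1 - c *\<^sub>R P e1)) < 0"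
      unfolding fe using True nw ne1 by (simp add: mult_pos_pos)
    moreover have "Re (cinner w' (T w' - c *\<^sub>R P w')) > 0" unfolding fw using True by simp
    ultimately show ?thesis by blast
  next
    case False
    then have an: "a < 0" using a0 by simp
    have "Re (cinner e1 (T e1 - c *\<^sub>R P e1)) > 0"
      unfolding fe using an nw ne1 by (simp add: mult_neg_pos divide_neg_pos)
    moreover have "Re (cinner w' (T w' - c *\<^sub>R P w')) < 0" unfolding fw using an by simp
    ultimately show ?thesis by blast
  qed
qed

locale cube_irr = cube X p adj d u for X :: "'v set" and p :: "'v \<Rightarrow> 'h::complex_hilbert \<Rightarrow> 'h" and adj d u +
  assumes p_sadj: "x \<in> X \<Longrightarrow> sadj (p x)"
    and irr: "\<And>K. csubspace K \<Longrightarrow> closed K \<Longrightarrow> (\<forall>x\<in>X. p x ` K \<subseteq> K) \<Longrightarrow> K = {0} \<or> K = UNIV"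
begin

lemma pwl_clin: "set ws \<subseteq> X \<Longrightarrow> clin (pwl p ws)"
proof (induction ws)
  case Nil then show ?case by (simp add: id_def clin_id)
next
  case (Cons x ws) then show ?case by (simp add: clin_comp p_clin)
qed

lemma K_trivial:
  fixes Phi :: "'h \<Rightarrow> 'b::real_normed_vector"
  assumes bl: "bounded_linear Phi" and sc: "\<And>a x. Phi x = 0 \<Longrightarrow> Phi (scaleC a x) = 0"
    and nz: "h0 \<noteq> 0" and h0K: "\<And>ws. set ws \<subseteq> X \<Longrightarrow> Phi (pwl p ws h0) = 0" and h1: "Phi h1 \<noteq> 0"
  shows False
proof -
  define K where "K = {h. \<forall>ws. set ws \<subseteq> X \<longrightarrow> Phi (pwl p ws h) = 0}"
  have lin: "linear Phi" using bl bounded_linear.linear by blast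
  have sub: "csubspace K"
    unfolding module.subspace_def[OF cvs_module]
  proof (intro conjI ballI allI)
    show "0 \<in> K" unfolding K_def
      using clin_zero[OF pwl_clin] linear_0[OF lin] by auto
    show "x + y \<in> K" if "x \<in> K" "y \<in> K" for x y
      using that unfolding K_def
      by (auto simp: clinD_add[OF pwl_clin] linear_add[OF lin])
    show "scaleC c x \<in> K" if "x \<in> K" for c x
      using that unfolding K_def by (auto simp: clinD_scale[OF pwl_clin] sc)
  qed
  have clw: "closed {h. set ws \<subseteq> X \<longrightarrow> Phi (pwl p ws h) = 0}" for ws
  proof (cases "set ws \<subseteq> X")
    case True
    have "continuous_on UNIV (\<lambda>h. Phi (pwl p ws h))"
      using bounded_linear_compose[OF bl clin_bounded_linear[OF pwl_clin[OF True]]]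
      by (simp add: linear_continuous_on)
    then have "closed {h. Phi (pwl p ws h) = 0}"
      using closed_Collect_eq[of "\<lambda>h. Phi (pwl p ws h)" "\<lambda>_. 0"] by simp
    then show ?thesis using True by simp
  next
    case False then show ?thesis by simp
  qed
  have cl: "closed K" unfolding K_def by (rule closed_Collect_all) (rule clw)
  have inv: "\<forall>x\<in>X. p x ` K \<subseteq> K"
  proof (intro ballI subsetI)
    fix x k assume x: "x \<in> X" and "k \<in> p x ` K"
    then obtain h where h: "h \<in> K" "k = p x h" by blast
    have "Phi (pwl p ws k) = 0" if ws: "set ws \<subseteq> X" for ws
    proof -
      have "pwl p ws k = pwl p (ws @ [x]) h" using h by (simp add: pwl_append)
      moreover have "set (ws @ [x]) \<subseteq> X" using ws x by simp
      ultimately show ?thesis using h(1) unfolding K_def by simp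
    qed
    then show "k \<in> K" unfolding K_def by simp
  qed
  have "K = {0} \<or> K = UNIV" by (rule irr[OF sub cl inv])
  moreover have "h0 \<in> K" unfolding K_def using h0K by simp
  moreover have "h1 \<notin> K" unfolding K_def using h1 by (auto intro!: exI[of _ "[]"])
  ultimately show False using nz by auto
qed


lemma T_sadj: "adj u v \<Longrightarrow> sadj (T v)"
proof -
  assume uv: "adj u v"
  have vX: "v \<in> X" using adj_X[OF uv] by simp
  show ?thesis unfolding sadj_def T_def
    by (simp add: sadjD[OF p_sadj[OF u_X]] sadjD[OF p_sadj[OF vX]])
qed

lemma T_scalar: "adj u v \<Longrightarrow> \<exists>l. T v = (\<lambda>h. scaleC l (p u h))"
proof (rule ccontr)
  assume uv: "adj u v" and nsc: "\<not> (\<exists>l. T v = (\<lambda>h. scaleC l (p u h)))"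
  have vX: "v \<in> X" using adj_X[OF uv] by simp
  have Tl: "clin (T v)" by (rule T_clin[OF uv])
  have Ts: "sadj (T v)" by (rule T_sadj[OF uv])
  have TP: "T v (p u h) = T v h" for h by (simp add: T_def p_idem[OF u_X])
  have PT: "p u (T v h) = T v h" for h by (simp add: T_def p_idem[OF u_X])
  obtain c :: real and x0 y0 where x0: "Re (cinner x0 (T v x0 - c *\<^sub>R p u x0)) > 0"
    and y0: "Re (cinner y0 (T v y0 - c *\<^sub>R p u y0)) < 0"
    using choose_c[OF pu_clin p_sadj[OF u_X] p_idem[OF u_X] Tl Ts TP PT nsc] by blast
  define S where "S = (\<lambda>h. T v h - c *\<^sub>R p u h)"
  have Sl: "clin S" unfolding S_def by (intro clin_minus2 Tl clin_smultR pu_clin)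
  have Ss: "sadj S" unfolding S_def sadj_def
    by (simp add: cinner_diff_left cinner_diff_right cinner_scaleR_left cinner_scaleR_right
        sadjD[OF Ts] sadjD[OF p_sadj[OF u_X]])
  obtain F G where Fl: "clin F" and Gl: "clin G" and FG: "\<forall>h. F (G h) = 0"
    and Fnz: "\<exists>h. F h \<noteq> 0" and Gnz: "\<exists>h. G h \<noteq> 0"
    and ker: "\<forall>h. S h = 0 \<longrightarrow> F h = 0 \<and> G h = 0"
    and comm: "\<forall>Z. clin Z \<longrightarrow> (\<forall>h. Z (S h) = S (Z h)) \<longrightarrow> (\<forall>h. Z (F h) = F (Z h) \<and> Z (G h) = G (Z h))"
    using posneg_split[OF Sl Ss, of x0 y0] x0 y0 unfolding S_def by blast
  have Spu: "p u (S h) = S (p u h)" for h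
    by (simp add: S_def TP PT clin_diff[OF pu_clin] clin_scaleR[OF pu_clin] p_idem[OF u_X])
  have Zcomm: "Z (F h) = F (Z h) \<and> Z (G h) = G (Z h)" if "clin Z" "\<And>h. Z (S h) = S (Z h)" for Z h
    using comm that by blast
  have Spu0: "S (h - p u h) = 0" for h
    by (simp add: S_def clin_diff[OF Tl] clin_diff[OF pu_clin] TP p_idem[OF u_X] scaleR_diff_right)
  have FP: "F h = F (p u h)" for h
  proof -
    have "F (h - p u h) = 0" using ker Spu0 by blast
    then show ?thesis by (simp add: clin_diff[OF Fl])
  qed
  have GP: "G h = p u (G h)" for h
  proof -
    have "G (h - p u h) = 0" using ker Spu0 by blast
    then have "G h = G (p u h)" by (simp add: clin_diff[OF Gl])
    also have "\<dots> = p u (G h)" using Zcomm[OF pu_clin Spu] by simp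
    finally show ?thesis .
  qed
  obtain g0 where g0: "G g0 \<noteq> 0" using Gnz by blast
  obtain h1 where h1: "F h1 \<noteq> 0" using Fnz by blast
  have h0K: "F (pwl p ws (G g0)) = 0" if ws: "set ws \<subseteq> X" for ws
  proof -
    define Zc where "Zc = p u \<circ> pwl p ws \<circ> p u"
    have ZcLS: "Zc \<in> LS (Collect Cp)" unfolding Zc_def by (rule corner[OF ws])
    have Zcl: "clin Zc" using LS_clin[OF ZcLS] Cp_props by blast
    have ZcT: "Zc (T v h) = T v (Zc h)" for h using fun_cong[OF LSCp_comm[OF ZcLS uv], of h] by simp
    have ZcP: "Zc (p u h) = Zc h" "p u (Zc h) = Zc h" for h by (simp_all add: Zc_def p_idem[OF u_X])
    have ZcS: "Zc (S h) = S (Zc h)" for h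
      by (simp add: S_def clin_diff[OF Zcl] clin_scaleR[OF Zcl] ZcT ZcP)
    have "F (pwl p ws (G g0)) = F (p u (pwl p ws (p u (G g0))))" using FP GP by metis
    also have "\<dots> = F (Zc (G g0))" by (simp add: Zc_def)
    also have "\<dots> = Zc (F (G g0))" using Zcomm[OF Zcl ZcS] by simp
    also have "\<dots> = 0" using FG clin_zero[OF Zcl] by simp
    finally show ?thesis .
  qed
  show False
    by (rule K_trivial[of F, OF clin_bounded_linear[OF Fl] _ g0 h0K h1]) (simp add: clinD_scale[OF Fl])
qed

lemma corner_scalar: "set ws \<subseteq> X \<Longrightarrow> \<exists>m. p u \<circ> pwl p ws \<circ> p u = (\<lambda>h. scaleC m (p u h))"
  by (rule LSCp_scalar[OF T_scalar corner])

lemma rank1: "\<exists>e0. range (p u) \<subseteq> cvs.span {e0}"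
proof (cases "\<forall>h. p u h = 0")
  case True
  then have "range (p u) \<subseteq> cvs.span {0}" by (auto simp: cvs.span_zero)
  then show ?thesis by blast
next
  case False
  then obtain e where "p u e \<noteq> 0" by blast
  define e1 where "e1 = p u e"
  have e1: "e1 \<noteq> 0" "p u e1 = e1" using \<open>p u e \<noteq> 0\<close> by (simp_all add: e1_def p_idem[OF u_X])
  have "f \<in> cvs.span {e1}" if "f \<in> range (p u)" for f
  proof -
    obtain g where f: "f = p u g" using \<open>f \<in> range (p u)\<close> by blast
    have fP: "p u f = f" by (simp add: f p_idem[OF u_X])
    define t where "t = cinner e1 f / cinner e1 e1"
    define f' where "f' = f - scaleC t e1"
    have ee: "cinner e1 e1 \<noteq> 0" using e1 by (simp add: cinner_self_eq_0)
    have orth: "cinner e1 f' = 0" using ee by (simp add: f'_def cinner_diff_right cinner_scaleC_right t_def)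
    have f'P: "p u f' = f'" by (simp add: f'_def clin_diff[OF pu_clin] clinD_scale[OF pu_clin] fP e1)
    have "f' = 0"
    proof (rule ccontr)
      assume f'0: "f' \<noteq> 0"
      define Phi where "Phi = (\<lambda>h. cinner f' (p u h))"
      have bl: "bounded_linear Phi" unfolding Phi_def
        by (rule bounded_linear_compose[OF cinner_right_bl clin_bounded_linear[OF pu_clin]])
      have sc: "Phi (scaleC a x) = 0" if "Phi x = 0" for a x
        using that by (simp add: Phi_def clinD_scale[OF pu_clin] cinner_scaleC_right)
      have h0K: "Phi (pwl p ws e1) = 0" if ws: "set ws \<subseteq> X" for ws
      proof -
        obtain m where m: "p u \<circ> pwl p ws \<circ> p u = (\<lambda>h. scaleC m (p u h))" using corner_scalar[OF ws] by blast
        have "p u (pwl p ws e1) = p u (pwl p ws (p u e1))" using e1 by simp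
        also have "\<dots> = scaleC m (p u e1)" using fun_cong[OF m, of e1] by simp
        also have "\<dots> = scaleC m e1" using e1 by simp
        finally have "Phi (pwl p ws e1) = m * cinner f' e1" by (simp add: Phi_def cinner_scaleC_right)
        also have "cinner f' e1 = 0" using orth by (metis cinner_commute complex_cnj_zero)
        finally show ?thesis by simp
      qed
      have h1: "Phi f' \<noteq> 0" using f'0 by (simp add: Phi_def f'P cinner_self_eq_0)
      show False by (rule K_trivial[OF bl sc e1(1) h0K h1])
    qed
    then have "f = scaleC t e1" by (simp add: f'_def)
    then show ?thesis by (simp add: cvs.span_scale cvs.span_base)
  qed
  then show ?thesis by blast
qed

end

lemma flip_lt: "x < 2 ^ n \<Longrightarrow> k < n \<Longrightarrow> flip_bit k x < (2::nat) ^ n"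
proof -
  assume x: "x < 2 ^ n" and k: "k < n"
  have "take_bit n (flip_bit k x) = flip_bit k (take_bit n x)" using k by (simp add: take_bit_flip_bit_eq)
  also have "take_bit n x = x" using x by (simp add: take_bit_nat_eq_self_iff)
  finally show ?thesis by (simp add: take_bit_nat_eq_self_iff[symmetric])
qed

lemma flip_flip: "flip_bit k (flip_bit k (x::nat)) = x"
  by (rule bit_eqI) (auto simp: bit_flip_bit_iff)

lemma flip_comm: "flip_bit i (flip_bit j (x::nat)) = flip_bit j (flip_bit i x)"
  by (rule bit_eqI) (auto simp: bit_flip_bit_iff)

lemma flip_neq: "flip_bit k (x::nat) \<noteq> x"
proof
  assume "flip_bit k x = x"
  then have "bit (flip_bit k x) k = bit x k" by simp
  then show False by (simp add: bit_flip_bit_iff)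
qed

lemma flip2_neq: "i \<noteq> j \<Longrightarrow> flip_bit j (flip_bit i (x::nat)) \<noteq> x"
proof
  assume ij: "i \<noteq> j" and "flip_bit j (flip_bit i x) = x"
  then have "bit (flip_bit j (flip_bit i x)) i = bit x i" by simp
  then show False using ij by (simp add: bit_flip_bit_iff)
qed

lemma flip_ij_neq: "i \<noteq> j \<Longrightarrow> flip_bit i (x::nat) \<noteq> flip_bit j x"
proof
  assume ij: "i \<noteq> j" and "flip_bit i x = flip_bit j x"
  then have "bit (flip_bit i x) i = bit (flip_bit j x) i" by simp
  then show False using ij by (simp add: bit_flip_bit_iff)
qed

lemma common_nb:
  assumes ij: "i \<noteq> j" and eq: "flip_bit l (flip_bit k (a::nat)) = flip_bit j (flip_bit i a)"
  shows "k = i \<or> k = j"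
proof (rule ccontr)
  assume nk: "\<not> (k = i \<or> k = j)"
  have b: "bit (flip_bit l (flip_bit k a)) m = bit (flip_bit j (flip_bit i a)) m" for m using eq by simp
  show False
  proof (cases "l = k")
    case True
    show False using b[of i] True nk ij by (auto simp: bit_flip_bit_iff)
  next
    case False
    show False using b[of k] False nk by (auto simp: bit_flip_bit_iff)
  qed
qed

lemma par_flip:
  assumes k: "k < n"
  shows "par (n - 1) (flip_bit k x) = 1 - par (n - 1) x"
proof -
  let ?A = "{..n - 1}"
  have kA: "k \<in> ?A" using k by simp
  let ?f = "\<lambda>y l. if bit y l then 1 else (0::nat)"
  have R: "(\<Sum>l\<in>?A - {k}. ?f (flip_bit k x) l) = (\<Sum>l\<in>?A - {k}. ?f x l)"
    by (rule sum.cong) (auto simp: bit_flip_bit_iff)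
  have S1: "(\<Sum>l\<in>?A. ?f (flip_bit k x) l) = ?f (flip_bit k x) k + (\<Sum>l\<in>?A - {k}. ?f x l)"
    using sum.remove[OF _ kA, of "?f (flip_bit k x)"] R by simp
  have S2: "(\<Sum>l\<in>?A. ?f x l) = ?f x k + (\<Sum>l\<in>?A - {k}. ?f x l)"
    using sum.remove[OF _ kA, of "?f x"] by simp
  show ?thesis unfolding par_def S1 S2
    by (cases "bit x k") (auto simp: bit_flip_bit_iff, presburger+)
qed

definition hamd :: "nat \<Rightarrow> nat \<Rightarrow> nat \<Rightarrow> nat" where
  "hamd n u x = card {m. m < n \<and> bit x m \<noteq> bit u m}"

lemma hd_self: "hamd n u u = 0" by (simp add: hamd_def)

lemma hd_flip:
  assumes k: "k < n"
  shows "int (hamd n u (flip_bit k x)) = int (hamd n u x) + (if bit x k = bit u k then 1 else -1)"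
proof -
  let ?A = "{m. m < n \<and> bit x m \<noteq> bit u m}"
  let ?B = "{m. m < n \<and> bit (flip_bit k x) m \<noteq> bit u m}"
  have fA: "finite ?A" by simp
  show ?thesis
  proof (cases "bit x k = bit u k")
    case True
    have "?B = insert k ?A" using k True by (auto simp: bit_flip_bit_iff)
    moreover have "k \<notin> ?A" using True by simp
    ultimately have "card ?B = Suc (card ?A)" using fA by simp
    then show ?thesis using True by (simp add: hamd_def)
  next
    case False
    have "?B = ?A - {k}" using k False by (auto simp: bit_flip_bit_iff)
    moreover have "k \<in> ?A" using False k by simp
    ultimately have "card ?B = card ?A - 1" using fA by simp
    moreover have "card ?A \<ge> 1" using \<open>k \<in> ?A\<close> fA by (metis One_nat_def Suc_leI card_gt_0_iff empty_iff)
    ultimately show ?thesis using False by (simp add: hamd_def of_nat_diff)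
  qed
qed

lemma hd_flip_cases: "k < n \<Longrightarrow> hamd n u (flip_bit k x) = hamd n u x + 1 \<or> hamd n u x = hamd n u (flip_bit k x) + 1"
  using hd_flip[of k n u x] by (cases "bit x k = bit u k") auto

lemma hd_flip2:
  assumes "i < n" "j < n" "i \<noteq> j"
  shows "int (hamd n u (flip_bit j a)) = int (hamd n u a) + int (hamd n u (flip_bit j (flip_bit i a))) - int (hamd n u (flip_bit i a))"
proof -
  have bi: "bit (flip_bit j a) i = bit a i" using assms by (simp add: bit_flip_bit_iff)
  show ?thesis using hd_flip[OF assms(1), of u a] hd_flip[OF assms(2), of u a]
      hd_flip[OF assms(1), of u "flip_bit j a"] bi flip_comm[of j i a]
    by (simp split: if_splits)
qed

lemma proj_orth:
  fixes P :: "'i \<Rightarrow> 'a::complex_hilbert \<Rightarrow> 'a"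
  assumes fin: "finite S" and pr: "\<And>s. s \<in> S \<Longrightarrow> is_projection (P s)"
    and sum1: "\<And>h. (\<Sum>s\<in>S. P s h) = h" and s: "s \<in> S" and t: "t \<in> S" and st: "s \<noteq> t"
  shows "P s (P t h) = 0"
proof -
  define a where "a = P t h"
  have sq: "Re (cinner a (P r a)) = (norm (P r a))\<^sup>2" if "r \<in> S" for r
  proof -
    have "cinner (P r a) (P r a) = cinner a (P r a)"
      using proj_clin[OF pr[OF that]] by (simp add: sadjD)
    then show ?thesis by (metis Re_cinner_self)
  qed
  have "(norm a)\<^sup>2 = Re (cinner a (\<Sum>r\<in>S. P r a))" by (simp add: sum1 Re_cinner_self)
  also have "\<dots> = (\<Sum>r\<in>S. Re (cinner a (P r a)))" by (simp add: cinner_sum_right)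
  also have "\<dots> = (\<Sum>r\<in>S. (norm (P r a))\<^sup>2)" by (rule sum.cong) (simp_all add: sq)
  also have "\<dots> = (norm (P t a))\<^sup>2 + (\<Sum>r\<in>S - {t}. (norm (P r a))\<^sup>2)"
    by (rule sum.remove[OF fin t])
  also have "P t a = a" unfolding a_def using proj_clin[OF pr[OF t]] by simp
  finally have "(\<Sum>r\<in>S - {t}. (norm (P r a))\<^sup>2) = 0" by simp
  then have "\<forall>r\<in>S - {t}. (norm (P r a))\<^sup>2 = 0"
    using fin by (subst (asm) sum_nonneg_eq_0_iff) auto
  then have "(norm (P s a))\<^sup>2 = 0" using s st by blast
  then show ?thesis by (simp add: a_def)
qed

definition qadj :: "nat \<Rightarrow> nat \<Rightarrow> nat \<Rightarrow> bool" where
  "qadj n x y \<longleftrightarrow> x < 2 ^ n \<and> y < 2 ^ n \<and> (\<exists>k<n. y = flip_bit k x)"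

lemma par_01: "par k x = 0 \<or> par k x = 1"
  unfolding par_def by auto

lemma XX_eq: "hcU n \<union> hcV n = {..<2 ^ n}"
  unfolding hcU_def hcV_def using par_01 by auto

lemma UV_disj: "hcU n \<inter> hcV n = {}"
  unfolding hcU_def hcV_def by auto

lemma qadj_sym: "qadj n x y \<Longrightarrow> qadj n y x"
  unfolding qadj_def by (auto simp: flip_flip)

lemma qadj_par: "qadj n x y \<Longrightarrow> par (n - 1) y = 1 - par (n - 1) x"
  unfolding qadj_def using par_flip by auto

lemma hc_adj_qadj: "u < 2 ^ n \<Longrightarrow> v < 2 ^ n \<Longrightarrow> hc_adj n u v \<longleftrightarrow> qadj n u v"
  unfolding hc_adj_def qadj_def by auto

context
  fixes n :: nat and p :: "nat \<Rightarrow> 'h::complex_hilbert \<Rightarrow> 'h"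
  assumes n1: "n \<ge> 1" and rep: "hc_rep n p"
begin

lemma XX_proj: "x \<in> hcU n \<union> hcV n \<Longrightarrow> is_projection (p x)"
  using rep unfolding hc_rep_def by blast

lemma pX_clin: "x \<in> hcU n \<union> hcV n \<Longrightarrow> clin (p x)" using proj_clin XX_proj by blast
lemma pX_sadj: "x \<in> hcU n \<union> hcV n \<Longrightarrow> sadj (p x)" using proj_clin XX_proj by blast
lemma pX_idem: "x \<in> hcU n \<union> hcV n \<Longrightarrow> p x (p x h) = p x h" using proj_clin XX_proj by blast

lemma finU: "finite (hcU n)" unfolding hcU_def by simp
lemma finV: "finite (hcV n)" unfolding hcV_def by simp

lemma sumU: "(\<Sum>u\<in>hcU n. p u h) = h" using rep unfolding hc_rep_def by blast
lemma sumV: "(\<Sum>v\<in>hcV n. p v h) = h" using rep unfolding hc_rep_def by blast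

lemma mixed_zero: "u \<in> hcU n \<Longrightarrow> v \<in> hcV n \<Longrightarrow> \<not> qadj n u v \<Longrightarrow> p u (p v h) = 0"
proof -
  assume u: "u \<in> hcU n" and v: "v \<in> hcV n" and na: "\<not> qadj n u v"
  have "\<not> hc_adj n u v" using na hc_adj_qadj[of u n v] u v unfolding hcU_def hcV_def by auto
  then show ?thesis using rep u v unfolding hc_rep_def by blast
qed

lemma mixed_zero2: "u \<in> hcU n \<Longrightarrow> v \<in> hcV n \<Longrightarrow> \<not> qadj n u v \<Longrightarrow> p v (p u h) = 0"
proof -
  assume u: "u \<in> hcU n" and v: "v \<in> hcV n" and na: "\<not> qadj n u v"
  have su: "sadj (p u)" and sv: "sadj (p v)" using u v pX_sadj by auto
  have "cinner (p v (p u h)) (p v (p u h)) = cinner h (p u (p v (p v (p u h))))"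
    by (simp add: sadjD[OF sv] sadjD[OF su])
  also have "\<dots> = 0" using mixed_zero[OF u v na] by simp
  finally show ?thesis by (simp add: cinner_self_eq_0)
qed

lemma pz: "x \<in> hcU n \<union> hcV n \<Longrightarrow> y \<in> hcU n \<union> hcV n \<Longrightarrow> x \<noteq> y \<Longrightarrow> \<not> qadj n x y \<Longrightarrow> p x (p y h) = 0"
proof -
  assume x: "x \<in> hcU n \<union> hcV n" and y: "y \<in> hcU n \<union> hcV n" and xy: "x \<noteq> y" and na: "\<not> qadj n x y"
  consider "x \<in> hcU n" "y \<in> hcU n" | "x \<in> hcV n" "y \<in> hcV n" | "x \<in> hcU n" "y \<in> hcV n" | "x \<in> hcV n" "y \<in> hcU n"
    using x y by blast
  then show ?thesis
  proof cases
    case 1 then show ?thesis using proj_orth[OF finU, of p] XX_proj sumU xy by blast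
  next
    case 2 then show ?thesis using proj_orth[OF finV, of p] XX_proj sumV xy by blast
  next
    case 3 then show ?thesis using mixed_zero na by blast
  next
    case 4 then show ?thesis using mixed_zero2 na qadj_sym by blast
  qed
qed

lemma side_sum: "x \<in> hcU n \<union> hcV n \<Longrightarrow> (\<Sum>y\<in>{y. y < 2 ^ n \<and> par (n - 1) y = par (n - 1) x}. p y g) = g"
proof -
  assume "x \<in> hcU n \<union> hcV n"
  show ?thesis
  proof (cases "par (n - 1) x = 0")
    case True then show ?thesis using sumU unfolding hcU_def by simp
  next
    case False
    then have "par (n - 1) x = 1" using par_01[of "n - 1" x] by simp
    then show ?thesis using sumV unfolding hcV_def by simp
  qed
qed

end

context
  fixes n :: nat and p :: "nat \<Rightarrow> 'h::complex_hilbert \<Rightarrow> 'h"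
  assumes n1: "n \<ge> 1" and rep: "hc_rep n p"
begin

lemma qadj_XX: "qadj n x y \<Longrightarrow> x \<in> hcU n \<union> hcV n \<and> y \<in> hcU n \<union> hcV n"
  unfolding XX_eq qadj_def by simp

lemma qadj_par2: "qadj n a b \<Longrightarrow> qadj n b c \<Longrightarrow> par (n - 1) c = par (n - 1) a"
  using qadj_par[of n a b] qadj_par[of n b c] par_01[of "n - 1" a] by auto

lemma not_qadj_same: "par (n - 1) c = par (n - 1) a \<Longrightarrow> \<not> qadj n a c"
  using qadj_par[of n a c] par_01[of "n - 1" a] by auto

lemma q_square:
  assumes ab: "qadj n a b" and bc: "qadj n b c" and ac: "a \<noteq> c" and ab': "qadj n a b'"
    and b'c: "qadj n b' c" and bb': "b' \<noteq> b"
  shows "p a (p b (p c h)) = - p a (p b' (p c h)) \<and>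
    int (hamd n x0 b') = int (hamd n x0 a) + int (hamd n x0 c) - int (hamd n x0 b)"
proof -
  obtain i where i: "i < n" "b = flip_bit i a" using ab unfolding qadj_def by blast
  obtain j where j: "j < n" "c = flip_bit j b" using bc unfolding qadj_def by blast
  have ij: "i \<noteq> j" using ac i j flip_flip by auto
  obtain k where k: "k < n" "b' = flip_bit k a" using ab' unfolding qadj_def by blast
  obtain l where l: "l < n" "c = flip_bit l b'" using b'c unfolding qadj_def by blast
  have "k = i \<or> k = j" using common_nb[OF ij, of l k a] i j k l by simp
  moreover have "k \<noteq> i" using bb' i k by auto
  ultimately have kj: "k = j" by simp
  have b'j: "b' = flip_bit j a" using k kj by simp
  have dist: "int (hamd n x0 b') = int (hamd n x0 a) + int (hamd n x0 c) - int (hamd n x0 b)"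
    using hd_flip2[OF i(1) j(1) ij, of x0 a] b'j i j by simp
  have aX: "a \<in> hcU n \<union> hcV n" and bX: "b \<in> hcU n \<union> hcV n" and cX: "c \<in> hcU n \<union> hcV n"
    and b'X: "b' \<in> hcU n \<union> hcV n" using qadj_XX ab bc b'c by blast+
  have pca: "par (n - 1) c = par (n - 1) a" by (rule qadj_par2[OF ab bc])
  define S where "S = {y. y < 2 ^ n \<and> par (n - 1) y = par (n - 1) b}"
  have finS: "finite S" unfolding S_def by simp
  have bS: "b \<in> S" using bX unfolding S_def XX_eq by simp
  have b'S: "b' \<in> S" using b'X qadj_par[OF ab] qadj_par[OF ab'] unfolding S_def XX_eq by simp
  define g where "g = p c h"
  have sumS: "(\<Sum>y\<in>S. p y g) = g" unfolding S_def by (rule side_sum[OF n1 rep bX])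
  have pal: "clin (p a)" by (rule pX_clin[OF n1 rep aX])
  have "(\<Sum>y\<in>S. p a (p y g)) = p a g" using clin_sum[OF pal, of "\<lambda>y. p y g" S] sumS by simp
  also have "\<dots> = 0" unfolding g_def
    by (rule pz[OF n1 rep aX cX ac not_qadj_same[OF pca]])
  finally have s0: "(\<Sum>y\<in>S. p a (p y g)) = 0" .
  have zero: "p a (p y g) = 0" if y: "y \<in> S - {b, b'}" for y
  proof -
    have yX: "y \<in> hcU n \<union> hcV n" using y unfolding S_def XX_eq by simp
    have pyb: "par (n - 1) y = par (n - 1) b" using y unfolding S_def by simp
    have pba: "par (n - 1) b = 1 - par (n - 1) a" by (rule qadj_par[OF ab])
    have ya: "y \<noteq> a" using pyb pba par_01[of "n - 1" a] by auto
    have yc: "y \<noteq> c" using pyb pba pca par_01[of "n - 1" a] by auto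
    show ?thesis
    proof (cases "qadj n a y")
      case False
      then show ?thesis using pz[OF n1 rep aX yX ya[symmetric]] by blast
    next
      case True
      show ?thesis
      proof (cases "qadj n y c")
        case False
        then have "p y (p c h) = 0" using pz[OF n1 rep yX cX yc] by blast
        then show ?thesis using clin_zero[OF pal] by (simp add: g_def)
      next
        case True
        obtain m where m: "m < n" "y = flip_bit m a" using \<open>qadj n a y\<close> unfolding qadj_def by blast
        obtain m' where m': "m' < n" "c = flip_bit m' y" using True unfolding qadj_def by blast
        have "m = i \<or> m = j" using common_nb[OF ij, of m' m a] i j m m' by simp
        then have "y = b \<or> y = b'" using m i b'j by auto
        then show ?thesis using y by blast
      qed
    qed
  qed
  have "(\<Sum>y\<in>S. p a (p y g)) = (\<Sum>y\<in>{b, b'}. p a (p y g))"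
    by (rule sum.mono_neutral_right[OF finS]) (use bS b'S zero in auto)
  also have "\<dots> = p a (p b g) + p a (p b' g)" using bb' by simp
  finally have "p a (p b g) + p a (p b' g) = 0" using s0 by simp
  then have "p a (p b g) = - p a (p b' g)" by (simp add: eq_neg_iff_add_eq_0)
  then show ?thesis using dist by (simp add: g_def)
qed

lemma inst:
  assumes irr: "hc_irreducible n p" and x0: "x0 \<in> hcU n \<union> hcV n"
  shows "cube_irr (hcU n \<union> hcV n) p (qadj n) (hamd n x0) x0"
proof (intro cube_irr.intro cube.intro cube_irr_axioms.intro)
  show "x0 \<in> hcU n \<union> hcV n" by (rule x0)
  show "clin (p x)" if "x \<in> hcU n \<union> hcV n" for x using pX_clin[OF n1 rep that] .
  show "p x (p x h) = p x h" if "x \<in> hcU n \<union> hcV n" for x h using pX_idem[OF n1 rep that] .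
  show "p x (p y h) = 0" if "x \<in> hcU n \<union> hcV n" "y \<in> hcU n \<union> hcV n" "x \<noteq> y" "\<not> qadj n x y" for x y h
    using pz[OF n1 rep that] .
  show "x \<in> hcU n \<union> hcV n \<and> y \<in> hcU n \<union> hcV n" if "qadj n x y" for x y by (rule qadj_XX[OF that])
  show "qadj n y x" if "qadj n x y" for x y by (rule qadj_sym[OF that])
  show "hamd n x0 y = hamd n x0 x + 1 \<or> hamd n x0 x = hamd n x0 y + 1" if xy: "qadj n x y" for x y
  proof -
    obtain k where "k < n" "y = flip_bit k x" using xy unfolding qadj_def by blast
    then show ?thesis using hd_flip_cases[of k n x0 x] by simp
  qed
  show "hamd n x0 x0 = 0" by (rule hd_self)
  show "p a (p b (p c h)) = - p a (p b' (p c h)) \<and> int (hamd n x0 b') = int (hamd n x0 a) + int (hamd n x0 c) - int (hamd n x0 b)"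
    if "qadj n a b" "qadj n b c" "a \<noteq> c" "qadj n a b'" "qadj n b' c" "b' \<noteq> b" for a b c b' h
    by (rule q_square[OF that])
  show "\<exists>b'. qadj n a b' \<and> qadj n b' c \<and> b' \<noteq> b" if ab: "qadj n a b" and bc: "qadj n b c" and ac: "a \<noteq> c" for a b c
  proof -
    obtain i where i: "i < n" "b = flip_bit i a" using ab unfolding qadj_def by blast
    obtain j where j: "j < n" "c = flip_bit j b" using bc unfolding qadj_def by blast
    have ij: "i \<noteq> j" using ac i j flip_flip by auto
    have a2: "a < 2 ^ n" using ab unfolding qadj_def by simp
    have "qadj n a (flip_bit j a)" unfolding qadj_def using a2 j flip_lt by blast
    moreover have "qadj n (flip_bit j a) c"
    proof -
      have "c = flip_bit i (flip_bit j a)" using i j flip_comm by simp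
      moreover have "flip_bit j a < 2 ^ n" using a2 j flip_lt by blast
      moreover have "c < 2 ^ n" using bc unfolding qadj_def by simp
      ultimately show ?thesis unfolding qadj_def using i by blast
    qed
    moreover have "flip_bit j a \<noteq> b" using i flip_ij_neq[OF ij[symmetric]] by simp
    ultimately show ?thesis by blast
  qed
  show "sadj (p x)" if "x \<in> hcU n \<union> hcV n" for x using pX_sadj[OF n1 rep that] .
  show "K = {0} \<or> K = UNIV" if "csubspace K" "closed K" "\<forall>x\<in>hcU n \<union> hcV n. p x ` K \<subseteq> K" for K
    using irr that unfolding hc_irreducible_def by blast
qed

end

lemma cardU: "n \<ge> 1 \<Longrightarrow> card (hcU n) = 2 ^ (n - 1)"
proof -
  assume n1: "n \<ge> 1"
  have k0: "0 < n" using n1 by simp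
  have bij: "bij_betw (flip_bit 0) (hcU n) (hcV n)"
  proof (rule bij_betwI[where g="flip_bit 0"])
    show "flip_bit 0 \<in> hcU n \<rightarrow> hcV n"
      using par_flip[OF k0] flip_lt[OF _ k0] unfolding hcU_def hcV_def by auto
    show "flip_bit 0 \<in> hcV n \<rightarrow> hcU n"
      using par_flip[OF k0] flip_lt[OF _ k0] unfolding hcU_def hcV_def by auto
    show "flip_bit 0 (flip_bit 0 x) = x" for x :: nat by (rule flip_flip)
    show "flip_bit 0 (flip_bit 0 y) = y" for y :: nat by (rule flip_flip)
  qed
  have "card (hcU n) = card (hcV n)" by (rule bij_betw_same_card[OF bij])
  moreover have "card (hcU n) + card (hcV n) = 2 ^ n"
  proof -
    have "card (hcU n \<union> hcV n) = card (hcU n) + card (hcV n)"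
      by (rule card_Un_disjoint) (auto simp: hcU_def hcV_def)
    then show ?thesis by (simp add: XX_eq)
  qed
  moreover have "(2::nat) ^ n = 2 * 2 ^ (n - 1)" using n1 by (metis Suc_diff_1 k0 power_Suc)
  ultimately show ?thesis by simp
qed

theorem theorem3p5:
  fixes n :: nat and p :: "nat \<Rightarrow> 'h::complex_hilbert \<Rightarrow> 'h"
  assumes "n \<ge> 1"
    and "hc_rep n p"
    and "hc_irreducible n p"
  shows "hdim_le (UNIV :: 'h set) (2 ^ (n - 1)) \<and>
         (\<forall>x \<in> hcU n \<union> hcV n. hdim_le (range (p x)) 1)"
proof -
  note n1 = assms(1) and rep = assms(2) and irr = assms(3)
  have rank: "\<exists>e0. range (p x) \<subseteq> cvs.span {e0}" if x: "x \<in> hcU n \<union> hcV n" for x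
    by (rule cube_irr.rank1[OF inst[OF n1 rep irr x]])
  have part2: "hdim_le (range (p x)) 1" if x: "x \<in> hcU n \<union> hcV n" for x
  proof -
    obtain e0 where e0: "range (p x) \<subseteq> cvs.span {e0}" using rank[OF x] by blast
    show ?thesis unfolding hdim_le_def
    proof (intro allI impI)
      fix B assume B: "B \<subseteq> range (p x) \<and> \<not> cdependent B"
      have "finite B \<and> card B \<le> card {e0}"
        by (rule cvs.independent_span_bound) (use B e0 in auto)
      then show "finite B \<and> card B \<le> 1" by simp
    qed
  qed
  have "\<forall>u\<in>hcU n. \<exists>e0. range (p u) \<subseteq> cvs.span {e0}" using rank by blast
  then obtain E where E0: "\<forall>u\<in>hcU n. range (p u) \<subseteq> cvs.span {E u}"
    using bchoice[of "hcU n" "\<lambda>u e0. range (p u) \<subseteq> cvs.span {e0}"] by blast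
  have E: "range (p u) \<subseteq> cvs.span {E u}" if "u \<in> hcU n" for u using E0 that by blast
  have sp: "(UNIV :: 'h set) \<subseteq> cvs.span (E ` hcU n)"
  proof
    fix h :: 'h
    have "p u h \<in> cvs.span (E ` hcU n)" if u: "u \<in> hcU n" for u
    proof -
      have "p u h \<in> cvs.span {E u}" using E[OF u] by blast
      moreover have "cvs.span {E u} \<subseteq> cvs.span (E ` hcU n)" using u by (intro cvs.span_mono) auto
      ultimately show ?thesis by blast
    qed
    then have "(\<Sum>u\<in>hcU n. p u h) \<in> cvs.span (E ` hcU n)" by (intro cvs.span_sum) auto
    then show "h \<in> cvs.span (E ` hcU n)" using sumU[OF n1 rep] by simp
  qed
  have part1: "hdim_le (UNIV :: 'h set) (2 ^ (n - 1))"
    unfolding hdim_le_def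
  proof (intro allI impI)
    fix B :: "'h set" assume B: "B \<subseteq> UNIV \<and> \<not> cdependent B"
    have fin: "finite (E ` hcU n)" using finU[OF n1 rep] by simp
    have "finite B \<and> card B \<le> card (E ` hcU n)"
      by (rule cvs.independent_span_bound[OF fin]) (use B sp in auto)
    moreover have "card (E ` hcU n) \<le> card (hcU n)" by (rule card_image_le[OF finU[OF n1 rep]])
    ultimately show "finite B \<and> card B \<le> 2 ^ (n - 1)" using cardU[OF n1] by simp
  qed
  show ?thesis using part1 part2 by blast
qed

end
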